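(* Let $U\subset S^1$ be a non-empty connected open subset. Then: (i) if $U\subset(0,\pi)$, then $\widetilde{\mathscr O}_{\mathrm{per}}(U)$ is the ring of germs at $v=0$ of holomorphic functions on punctured neighbourhoods of $0$ in the $v$-plane, $\mathscr A^{\leqslant 0}_{\mathrm{per}}(U)=\mathbb C\{v\}$ and $\mathscr A^{<0}_{\mathrm{per}}(U)=v\,\mathbb C\{v\}$; (ii) if $U\subset(-\pi,0)$, then $\widetilde{\mathscr O}_{\mathrm{per}}(U)$ is the ring of germs at $u=0$ of holomorphic functions on punctured neighbourhoods of $0$ in the $u$-plane, $\mathscr A^{\leqslant 0}_{\mathrm{per}}(U)=\mathbb C\{u\}$ and $\mathscr A^{<0}_{\mathrm{per}}(U)=u\,\mathbb C\{u\}$; (iii) if $e^{0}\in U$ or $e^{\pi\mathrm i}\in U$, then $\widetilde{\mathscr O}_{\mathrm{per}}(U)$ is the ring of holomorphic functions of $u$ on $\mathbb C^*_u$, $\mathscr A^{\leqslant 0}_{\mathrm{per}}(U)=\mathbb C$ and $\mathscr A^{<0}_{\mathrm{per}}(U)=0$. Here these rings of functions of $u$ or $v$ are embedded in $\widetilde{\mathscr O}(U)$ via $u=\exp(2\pi\mathrm i t^{-1})$, $v=u^{-1}$.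
   Context: Let $t$ be a complex coordinate, $s=t^{-1}$, and $S^1=\{e^{\mathrm i\theta}\}$ the circle of directions at $t=0$; for real $a<b$ put $(a,b)=\{e^{\mathrm i\theta}: a<\theta<b\}$. Let $\widetilde{\mathbb C}=\{(t,e^{\mathrm i\theta})\in\mathbb C\times S^1: t=|t|e^{\mathrm i\theta}\}$ be the real oriented blow-up of $\mathbb C$ at $0$, with inclusions $\widetilde\jmath:\mathbb C^*\to\widetilde{\mathbb C}$, $t\mapsto (t,t/|t|)$, and $\widetilde\imath:S^1\to\widetilde{\mathbb C}$, $e^{\mathrm i\theta}\mapsto(0,e^{\mathrm i\theta})$. Put $\widetilde{\mathscr O}=\widetilde\imath^{-1}\widetilde\jmath_*\mathscr O_{\mathbb C^*}$ (germs along $S^1$ of holomorphic functions on sectors at $t=0$). Let $\mathscr A^{\leqslant0}\subset\widetilde{\mathscr O}$ (resp. $\mathscr A^{<0}$) be the subsheaf of functions of moderate growth (resp. rapid decay) as $t\to0$: on every closed subsector one has $|f|\le C|t|^{-N}$ for some $C,N$ (resp. $|f|\le C_N|t|^N$ for every $N$). Composition with $t\mapsto t/(1+t)$ (i.e. $s\mapsto s+1$) induces a ring automorphism $\widetilde\phi_t$ of $\widetilde{\mathscr O}$ preserving $\mathscr A^{\leqslant0}$ and $\mathscr A^{<0}$. Define $\widetilde{\mathscr O}_{\mathrm{per}}$, $\mathscr A^{\leqslant0}_{\mathrm{per}}$, $\mathscr A^{<0}_{\mathrm{per}}$ as the kernels of $\widetilde\phi_t-\mathrm{id}$ on $\widetilde{\mathscr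 O}$, $\mathscr A^{\leqslant0}$, $\mathscr A^{<0}$ respectively. Set $u=\exp(2\pi\mathrm i s)=\exp(2\pi\mathrm i t^{-1})$ and $v=u^{-1}$. *)

theory Defs
  imports "HOL-Complex_Analysis.Complex_Analysis"
begin

definition ucoord :: "complex \<Rightarrow> complex" where
  "ucoord t = exp (2 * of_real pi * \<i> / t)"

definition vcoord :: "complex \<Rightarrow> complex" where
  "vcoord t = inverse (ucoord t)"

definition arc_dir :: "real \<Rightarrow> real \<Rightarrow> complex set" where
  "arc_dir a b = {cis \<theta> | \<theta>. a < \<theta> \<and> \<theta> < b}"

text \<open>Omega (an open subset of C*) together with U is a neighbourhood of U in the real
  oriented blow-up: around every direction of U it contains an open sector.\<close>
definition sector_nbhd :: "complex set \<Rightarrow> complex set \<Rightarrow> bool" where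
  "sector_nbhd U \<Omega> \<longleftrightarrow> open \<Omega> \<and> 0 \<notin> \<Omega> \<and>
     (\<forall>\<theta>. cis \<theta> \<in> U \<longrightarrow> (\<exists>r>0. \<exists>\<epsilon>>0. \<forall>\<rho> \<phi>. 0 < \<rho> \<and> \<rho> < r \<and> \<bar>\<phi> - \<theta>\<bar> < \<epsilon>
         \<longrightarrow> complex_of_real \<rho> * cis \<phi> \<in> \<Omega>))"

text \<open>f represents a section of O-tilde over U.\<close>
definition holo_section :: "complex set \<Rightarrow> (complex \<Rightarrow> complex) \<Rightarrow> bool" where
  "holo_section U f \<longleftrightarrow> (\<exists>\<Omega>. sector_nbhd U \<Omega> \<and> f holomorphic_on \<Omega>)"

definition germ_eq :: "complex set \<Rightarrow> (complex \<Rightarrow> complex) \<Rightarrow> (complex \<Rightarrow> complex) \<Rightarrow> bool" where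
  "germ_eq U f g \<longleftrightarrow> (\<exists>\<Omega>. sector_nbhd U \<Omega> \<and> (\<forall>t\<in>\<Omega>. f t = g t))"

text \<open>Kernel of phi_t - id : f(t/(1+t)) = f(t) as germs along U.\<close>
definition per_section :: "complex set \<Rightarrow> (complex \<Rightarrow> complex) \<Rightarrow> bool" where
  "per_section U f \<longleftrightarrow> holo_section U f \<and> germ_eq U (\<lambda>t. f (t / (1 + t))) f"

definition moderate_section :: "complex set \<Rightarrow> (complex \<Rightarrow> complex) \<Rightarrow> bool" where
  "moderate_section U f \<longleftrightarrow> holo_section U f \<and>
     (\<forall>\<theta>. cis \<theta> \<in> U \<longrightarrow> (\<exists>\<epsilon>>0. \<exists>r>0. \<exists>C N. \<forall>\<rho> \<phi>. 0 < \<rho> \<and> \<rho> < r \<and> \<bar>\<phi> - \<theta>\<bar> \<le> \<epsilon>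
         \<longrightarrow> norm (f (complex_of_real \<rho> * cis \<phi>)) \<le> C * \<rho> powr (- N)))"

definition rapid_section :: "complex set \<Rightarrow> (complex \<Rightarrow> complex) \<Rightarrow> bool" where
  "rapid_section U f \<longleftrightarrow> holo_section U f \<and>
     (\<forall>\<theta>. cis \<theta> \<in> U \<longrightarrow> (\<exists>\<epsilon>>0. \<exists>r>0. \<forall>N::nat. \<exists>C. \<forall>\<rho> \<phi>. 0 < \<rho> \<and> \<rho> < r \<and> \<bar>\<phi> - \<theta>\<bar> \<le> \<epsilon>
         \<longrightarrow> norm (f (complex_of_real \<rho> * cis \<phi>)) \<le> C * \<rho> ^ N))"

definition punctured_germ_description :: "complex set \<Rightarrow> (complex \<Rightarrow> complex) \<Rightarrow> bool" where
  "punctured_germ_description U w \<longleftrightarrow>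
     (\<forall>\<rho> g. \<rho> > 0 \<and> g holomorphic_on (ball 0 \<rho> - {0}) \<longrightarrow> per_section U (\<lambda>t. g (w t)))
   \<and> (\<forall>\<rho>1 \<rho>2 g1 g2. \<rho>1 > 0 \<and> \<rho>2 > 0 \<and> g1 holomorphic_on (ball 0 \<rho>1 - {0})
        \<and> g2 holomorphic_on (ball 0 \<rho>2 - {0}) \<and> germ_eq U (\<lambda>t. g1 (w t)) (\<lambda>t. g2 (w t))
        \<longrightarrow> (\<exists>\<rho>>0. \<forall>z \<in> ball 0 \<rho> - {0}. g1 z = g2 z))
   \<and> (\<forall>f. per_section U f \<longrightarrow>
        (\<exists>\<rho>>0. \<exists>g. g holomorphic_on (ball 0 \<rho> - {0}) \<and> germ_eq U f (\<lambda>t. g (w t))))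
   \<and> (\<forall>f. (per_section U f \<and> moderate_section U f) \<longleftrightarrow>
        (\<exists>\<rho>>0. \<exists>h. h holomorphic_on ball 0 \<rho> \<and> germ_eq U f (\<lambda>t. h (w t))))
   \<and> (\<forall>f. (per_section U f \<and> rapid_section U f) \<longleftrightarrow>
        (\<exists>\<rho>>0. \<exists>h. h holomorphic_on ball 0 \<rho> \<and> h 0 = 0 \<and> germ_eq U f (\<lambda>t. h (w t))))"

definition entire_u_description :: "complex set \<Rightarrow> bool" where
  "entire_u_description U \<longleftrightarrow>
     (\<forall>g. g holomorphic_on (UNIV - {0}) \<longrightarrow> per_section U (\<lambda>t. g (ucoord t)))
   \<and> (\<forall>g1 g2. g1 holomorphic_on (UNIV - {0}) \<and> g2 holomorphic_on (UNIV - {0})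
        \<and> germ_eq U (\<lambda>t. g1 (ucoord t)) (\<lambda>t. g2 (ucoord t))
        \<longrightarrow> (\<forall>z. z \<noteq> 0 \<longrightarrow> g1 z = g2 z))
   \<and> (\<forall>f. per_section U f \<longrightarrow>
        (\<exists>g. g holomorphic_on (UNIV - {0}) \<and> germ_eq U f (\<lambda>t. g (ucoord t))))
   \<and> (\<forall>f. (per_section U f \<and> moderate_section U f) \<longleftrightarrow> (\<exists>c. germ_eq U f (\<lambda>t. c)))
   \<and> (\<forall>f. (per_section U f \<and> rapid_section U f) \<longleftrightarrow> germ_eq U f (\<lambda>t. 0))"

end

theory Submission
  imports Defs "HOL-Real_Asymp.Real_Asymp"
begin


definition csect :: "complex \<Rightarrow> real \<Rightarrow> real \<Rightarrow> complex set" where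
  "csect c r \<eta> = {t. t \<noteq> 0 \<and> norm t < r \<and> norm (sgn t - c) < \<eta>}"

lemma csect_iff: "t \<in> csect c r \<eta> \<longleftrightarrow> t \<noteq> 0 \<and> norm t < r \<and> norm (sgn t - c) < \<eta>"
  by (simp add: csect_def)

lemma open_csect: "open (csect c r \<eta>)"
proof -
  have e: "csect c r \<eta> = ((-{0}) \<inter> (\<lambda>t. norm t) -` {..<r}) \<inter> ((-{0}) \<inter> (\<lambda>t. norm (sgn t - c)) -` {..<\<eta>})"
    by (auto simp: csect_def)
  have c1: "continuous_on (-{0}) (\<lambda>t::complex. norm (sgn t - c))"
    by (intro continuous_intros) auto
  have c2: "continuous_on (-{0}) (\<lambda>t::complex. norm t)"
    by (intro continuous_intros)
  have o1: "open ((-{0}) \<inter> (\<lambda>t::complex. norm t) -` {..<r})"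
    using continuous_open_preimage[OF c2, of "{..<r}"] by auto
  have o2: "open ((-{0}) \<inter> (\<lambda>t::complex. norm (sgn t - c)) -` {..<\<eta>})"
    using continuous_open_preimage[OF c1, of "{..<\<eta>}"] by auto
  show ?thesis unfolding e using o1 o2 by (rule open_Int)
qed

lemma csect_mono: "r \<le> r' \<Longrightarrow> \<eta> \<le> \<eta>' \<Longrightarrow> csect c r \<eta> \<subseteq> csect c r' \<eta>'"
  by (auto simp: csect_def)

lemma csect_shift: "norm (c' - c) + \<eta>' \<le> \<eta> \<Longrightarrow> csect c' r \<eta>' \<subseteq> csect c r \<eta>"
proof
  fix t assume a: "norm (c' - c) + \<eta>' \<le> \<eta>" and t: "t \<in> csect c' r \<eta>'"
  have "norm (sgn t - c) \<le> norm (sgn t - c') + norm (c' - c)"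
    by (metis diff_add_cancel norm_triangle_ineq add_diff_eq)
  with t a show "t \<in> csect c r \<eta>" by (auto simp: csect_def)
qed

lemma csect_point:
  assumes "0 < \<rho>" "\<rho> < r" "norm c = 1" "norm (c - c') < \<eta>"
  shows "complex_of_real \<rho> * c \<in> csect c' r \<eta>"
proof -
  have "sgn (complex_of_real \<rho> * c) = c"
    using assms by (simp add: sgn_div_norm norm_mult scaleR_conv_of_real field_simps)
  then show ?thesis using assms by (auto simp: csect_def norm_mult)
qed

lemma sgn_ineq:
  fixes x y :: complex
  assumes "y \<noteq> 0"
  shows "norm (sgn x - sgn y) \<le> 2 * norm (x - y) / norm y"
proof (cases "x = 0")
  case True
  then show ?thesis using assms by (simp add: norm_sgn)
next
  case False
  have ny: "norm y > 0" using assms by simp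
  have nx: "norm x > 0" using False by simp
  have eq: "sgn x - sgn y = (x - y) / of_real (norm y) + x * of_real (1 / norm x - 1 / norm y)"
    using ny nx by (simp add: sgn_div_norm scaleR_conv_of_real field_simps)
  have "norm (x * of_real (1 / norm x - 1 / norm y)) = norm x * \<bar>1 / norm x - 1 / norm y\<bar>"
    by (simp only: norm_mult norm_of_real)
  also have "\<dots> = \<bar>norm y - norm x\<bar> / norm y"
    using nx ny by (simp add: field_simps abs_div abs_mult)
  also have "\<dots> \<le> norm (x - y) / norm y"
    using ny by (intro divide_right_mono) (auto simp: norm_triangle_ineq3 norm_minus_commute abs_minus_commute)
  finally have 1: "norm (x * of_real (1 / norm x - 1 / norm y)) \<le> norm (x - y) / norm y" .
  have 2: "norm ((x - y) / of_real (norm y)) = norm (x - y) / norm y"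
    by (simp add: norm_divide)
  have "norm (sgn x - sgn y) \<le> norm ((x - y) / of_real (norm y)) + norm (x * of_real (1 / norm x - 1 / norm y))"
    unfolding eq by (rule norm_triangle_ineq)
  also have "\<dots> \<le> 2 * norm (x - y) / norm y" using 1 2 by simp
  finally show ?thesis .
qed

lemma norm_cis_diff: "norm (cis a - cis b) \<le> \<bar>a - b\<bar>"
proof -
  have "(norm (cis a - cis b))^2 = (cos a - cos b)^2 + (sin a - sin b)^2"
    by (simp add: cmod_def)
  also have "\<dots> = 2 - 2 * cos (a - b)"
    by (simp add: power2_eq_square cos_diff algebra_simps)
  also have "\<dots> = 4 * (sin ((a - b)/2))^2"
  proof -
    have h: "cos (2 * ((a-b)/2)) = 1 - 2*(sin((a-b)/2))^2" by (rule cos_double_sin)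
    have "2 * ((a-b)/2) = a - b" by simp
    then have "cos (a-b) = 1 - 2*(sin((a-b)/2))^2" using h by metis
    then show ?thesis by simp
  qed
  also have "\<dots> \<le> 4 * ((a-b)/2)^2"
    using abs_sin_x_le_abs_x[of "(a-b)/2"]
    by (intro mult_left_mono) (auto simp: abs_le_square_iff simp del: abs_divide)
  also have "\<dots> = \<bar>a - b\<bar>^2" by (simp add: power2_eq_square)
  finally have "(norm (cis a - cis b))^2 \<le> \<bar>a - b\<bar>^2" .
  then show ?thesis by (rule power2_le_imp_le) simp
qed

lemma Arg_small:
  assumes "\<epsilon> > 0"
  shows "\<exists>\<eta>>0. \<forall>e. norm (e - 1) < \<eta> \<longrightarrow> \<bar>Arg e\<bar> < \<epsilon>"
proof -
  have "continuous (at 1) Arg"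
    by (rule continuous_at_Arg) (auto simp: complex_nonpos_Reals_iff)
  then obtain \<eta> where "\<eta> > 0" "\<forall>e. dist e 1 < \<eta> \<longrightarrow> dist (Arg e) (Arg 1) < \<epsilon>"
    using assms unfolding continuous_at_eps_delta by blast
  then show ?thesis by (auto simp: dist_norm)
qed

lemma unit_cis_Arg: "norm c = 1 \<Longrightarrow> cis (Arg c) = c"
  by (subst cis_Arg) (auto simp: sgn_div_norm)

lemma csect_in_angle:
  assumes "\<epsilon> > 0"
  shows "\<exists>\<eta>>0. \<forall>t \<in> csect (cis \<theta>) r \<eta>. \<exists>\<phi>. t = complex_of_real (norm t) * cis \<phi> \<and> \<bar>\<phi> - \<theta>\<bar> < \<epsilon>"
proof -
  obtain \<eta> where h: "\<eta> > 0" "\<forall>e. norm (e - 1) < \<eta> \<longrightarrow> \<bar>Arg e\<bar> < \<epsilon>"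
    using Arg_small[OF assms] by blast
  have "\<exists>\<phi>. t = complex_of_real (norm t) * cis \<phi> \<and> \<bar>\<phi> - \<theta>\<bar> < \<epsilon>" if t: "t \<in> csect (cis \<theta>) r \<eta>" for t
  proof -
    define e where "e = sgn t / cis \<theta>"
    have t0: "t \<noteq> 0" using t by (simp add: csect_def)
    have ne: "norm e = 1" using t0 by (simp add: e_def norm_divide norm_sgn)
    have "norm (e - 1) = norm (sgn t - cis \<theta>)"
    proof -
      have "e - 1 = (sgn t - cis \<theta>) / cis \<theta>" by (simp add: e_def field_simps)
      then show ?thesis by (simp add: norm_divide)
    qed
    then have "norm (e - 1) < \<eta>" using t by (simp add: csect_def)
    then have a: "\<bar>Arg e\<bar> < \<epsilon>" using h by blast
    have "complex_of_real (norm t) * cis (\<theta> + Arg e) = complex_of_real (norm t) * cis \<theta> * e"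
      using unit_cis_Arg[OF ne] by (simp add: cis_mult[symmetric] mult.assoc)
    also have "\<dots> = t" using t0 by (simp add: e_def sgn_div_norm scaleR_conv_of_real field_simps)
    finally show ?thesis using a by (intro exI[of _ "\<theta> + Arg e"]) auto
  qed
  then show ?thesis using h(1) by blast
qed

lemma angle_in_csect:
  assumes "0 < \<rho>" "\<rho> < r" "\<bar>\<phi> - \<theta>\<bar> < \<eta>"
  shows "complex_of_real \<rho> * cis \<phi> \<in> csect (cis \<theta>) r \<eta>"
  using csect_point[of \<rho> r "cis \<phi>" "cis \<theta>" \<eta>] assms norm_cis_diff[of \<phi> \<theta>] by auto



definition loc :: "complex set \<Rightarrow> (complex \<Rightarrow> bool) \<Rightarrow> bool" where
  "loc U P \<longleftrightarrow> (\<forall>c\<in>U. \<exists>r>0. \<exists>\<eta>>0. \<forall>t\<in>csect c r \<eta>. P t)"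

lemma loc_conj:
  assumes "loc U P" "loc U Q" shows "loc U (\<lambda>t. P t \<and> Q t)"
  unfolding loc_def
proof
  fix c assume c: "c \<in> U"
  obtain r1 \<eta>1 where 1: "r1 > 0" "\<eta>1 > 0" "\<forall>t\<in>csect c r1 \<eta>1. P t" using assms(1) c unfolding loc_def by blast
  obtain r2 \<eta>2 where 2: "r2 > 0" "\<eta>2 > 0" "\<forall>t\<in>csect c r2 \<eta>2. Q t" using assms(2) c unfolding loc_def by blast
  have "csect c (min r1 r2) (min \<eta>1 \<eta>2) \<subseteq> csect c r1 \<eta>1" "csect c (min r1 r2) (min \<eta>1 \<eta>2) \<subseteq> csect c r2 \<eta>2"
    by (rule csect_mono; simp)+
  then show "\<exists>r>0. \<exists>\<eta>>0. \<forall>t\<in>csect c r \<eta>. P t \<and> Q t" using 1 2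
    by (intro exI[of _ "min r1 r2"] conjI exI[of _ "min \<eta>1 \<eta>2"]) auto
qed

lemma loc_mono:
  assumes "loc U P" "\<And>t. t \<noteq> 0 \<Longrightarrow> P t \<Longrightarrow> Q t" shows "loc U Q"
proof -
  have "\<forall>t\<in>csect c r \<eta>. Q t" if "\<forall>t\<in>csect c r \<eta>. P t" for c r \<eta>
    using that assms(2) by (auto simp: csect_iff)
  then show ?thesis using assms(1) unfolding loc_def by meson
qed

lemma loc_D:
  assumes "loc U P" "c \<in> U" obtains r \<eta> where "r > 0" "\<eta> > 0" "\<forall>t\<in>csect c r \<eta>. P t"
  using assms unfolding loc_def by blast

lemma loc_shrink:
  assumes "loc U P" "c \<in> U" "r0 > 0" "\<eta>0 > 0"
  obtains r \<eta> where "r > 0" "\<eta> > 0" "r \<le> r0" "\<eta> \<le> \<eta>0" "\<forall>t\<in>csect c r \<eta>. P t"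
proof -
  obtain r \<eta> where h: "r > 0" "\<eta> > 0" "\<forall>t\<in>csect c r \<eta>. P t" using loc_D[OF assms(1,2)] by blast
  have "csect c (min r r0) (min \<eta> \<eta>0) \<subseteq> csect c r \<eta>" by (rule csect_mono; simp)
  then show ?thesis using that[of "min r r0" "min \<eta> \<eta>0"] h assms by auto
qed

lemma sector_iff:
  assumes U: "U \<subseteq> sphere 0 1"
  shows "sector_nbhd U \<Omega> \<longleftrightarrow> open \<Omega> \<and> 0 \<notin> \<Omega> \<and> loc U (\<lambda>t. t \<in> \<Omega>)"
proof
  assume s: "sector_nbhd U \<Omega>"
  have "\<exists>r>0. \<exists>\<eta>>0. \<forall>t\<in>csect c r \<eta>. t \<in> \<Omega>" if c: "c \<in> U" for c
  proof -
    have nc: "norm c = 1" using U c by auto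
    define \<theta> where "\<theta> = Arg c"
    have ct: "cis \<theta> = c" using unit_cis_Arg[OF nc] by (simp add: \<theta>_def)
    obtain r \<epsilon> where re: "r > 0" "\<epsilon> > 0" "\<forall>\<rho> \<phi>. 0 < \<rho> \<and> \<rho> < r \<and> \<bar>\<phi> - \<theta>\<bar> < \<epsilon> \<longrightarrow> complex_of_real \<rho> * cis \<phi> \<in> \<Omega>"
    proof -
      have "cis \<theta> \<in> U" using c ct by simp
      then show ?thesis using s that unfolding sector_nbhd_def by blast
    qed
    obtain \<eta> where \<eta>: "\<eta> > 0" "\<forall>t \<in> csect (cis \<theta>) r \<eta>. \<exists>\<phi>. t = complex_of_real (norm t) * cis \<phi> \<and> \<bar>\<phi> - \<theta>\<bar> < \<epsilon>"
      using csect_in_angle[OF re(2)] by blast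
    have "\<forall>t\<in>csect c r \<eta>. t \<in> \<Omega>"
    proof
      fix t assume t: "t \<in> csect c r \<eta>"
      then obtain \<phi> where p: "t = complex_of_real (norm t) * cis \<phi>" "\<bar>\<phi> - \<theta>\<bar> < \<epsilon>" using \<eta> ct by auto
      moreover have "0 < norm t" "norm t < r" using t by (auto simp: csect_def)
      ultimately have "complex_of_real (norm t) * cis \<phi> \<in> \<Omega>" using re(3) by blast
      then show "t \<in> \<Omega>" using p(1) by simp
    qed
    then show ?thesis using re \<eta> by blast
  qed
  then have "loc U (\<lambda>t. t \<in> \<Omega>)" unfolding loc_def by blast
  moreover have "open \<Omega>" "0 \<notin> \<Omega>" using s by (simp_all add: sector_nbhd_def)
  ultimately show "open \<Omega> \<and> 0 \<notin> \<Omega> \<and> loc U (\<lambda>t. t \<in> \<Omega>)" by blast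
next
  assume h: "open \<Omega> \<and> 0 \<notin> \<Omega> \<and> loc U (\<lambda>t. t \<in> \<Omega>)"
  have L: "loc U (\<lambda>t. t \<in> \<Omega>)" using h by blast
  have "\<exists>r>0. \<exists>\<epsilon>>0. \<forall>\<rho> \<phi>. 0 < \<rho> \<and> \<rho> < r \<and> \<bar>\<phi> - \<theta>\<bar> < \<epsilon> \<longrightarrow> complex_of_real \<rho> * cis \<phi> \<in> \<Omega>"
    if th: "cis \<theta> \<in> U" for \<theta>
  proof -
    obtain r \<eta> where r: "r > 0" "\<eta> > 0" "\<forall>t\<in>csect (cis \<theta>) r \<eta>. t \<in> \<Omega>" using loc_D[OF L th] by blast
    have "\<forall>\<rho> \<phi>. 0 < \<rho> \<and> \<rho> < r \<and> \<bar>\<phi> - \<theta>\<bar> < \<eta> \<longrightarrow> complex_of_real \<rho> * cis \<phi> \<in> \<Omega>"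
    proof (intro allI impI)
      fix \<rho> \<phi> assume a: "0 < \<rho> \<and> \<rho> < r \<and> \<bar>\<phi> - \<theta>\<bar> < \<eta>"
      have "complex_of_real \<rho> * cis \<phi> \<in> csect (cis \<theta>) r \<eta>"
        by (rule angle_in_csect) (use a in auto)
      then show "complex_of_real \<rho> * cis \<phi> \<in> \<Omega>" using r(3) by blast
    qed
    then show ?thesis using r(1,2) by blast
  qed
  moreover have "open \<Omega>" "0 \<notin> \<Omega>" using h by blast+
  ultimately show "sector_nbhd U \<Omega>" unfolding sector_nbhd_def by blast
qed

definition sunion :: "complex set \<Rightarrow> (complex \<Rightarrow> bool) \<Rightarrow> complex set" where
  "sunion U P = \<Union>{csect c r \<eta> | c r \<eta>. c \<in> U \<and> r > 0 \<and> \<eta> > 0 \<and> (\<forall>t\<in>csect c r \<eta>. P t)}"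

lemma loc_union:
  assumes U: "U \<subseteq> sphere 0 1" and P: "loc U P"
  shows "\<exists>\<Omega>. sector_nbhd U \<Omega> \<and> (\<forall>t\<in>\<Omega>. P t)"
proof -
  have "open (sunion U P)" unfolding sunion_def by (auto intro!: open_Union open_csect)
  have "0 \<notin> sunion U P" unfolding sunion_def csect_def by auto
  have "\<forall>t\<in>sunion U P. P t" unfolding sunion_def by auto
  have "loc U (\<lambda>t. t \<in> sunion U P)"
  proof -
    have "\<forall>t\<in>csect c r \<eta>. t \<in> sunion U P" if "c \<in> U" "r > 0" "\<eta> > 0" "\<forall>t\<in>csect c r \<eta>. P t" for c r \<eta>
      using that unfolding sunion_def by blast
    then show ?thesis using P unfolding loc_def by meson
  qed
  then have "sector_nbhd U (sunion U P)"
    using sector_iff[OF U] \<open>open (sunion U P)\<close> \<open>0 \<notin> sunion U P\<close> by blast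
  then show ?thesis using \<open>\<forall>t\<in>sunion U P. P t\<close> by blast
qed

lemma germ_eq_iff:
  assumes U: "U \<subseteq> sphere 0 1"
  shows "germ_eq U f g \<longleftrightarrow> loc U (\<lambda>t. f t = g t)"
proof
  assume "germ_eq U f g"
  then obtain \<Omega> where "sector_nbhd U \<Omega>" "\<forall>t\<in>\<Omega>. f t = g t" unfolding germ_eq_def by blast
  then have L: "loc U (\<lambda>t. t \<in> \<Omega>)" "\<forall>t\<in>\<Omega>. f t = g t" using sector_iff[OF U] by blast+
  show "loc U (\<lambda>t. f t = g t)" by (rule loc_mono[OF L(1)]) (use L(2) in blast)
next
  assume "loc U (\<lambda>t. f t = g t)"
  then show "germ_eq U f g" using loc_union[OF U] unfolding germ_eq_def by blast
qed

lemma loc_open: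
  assumes "loc U P" shows "loc U (\<lambda>t. \<exists>e>0. \<forall>x\<in>ball t e. P x)"
  unfolding loc_def
proof
  fix c assume c: "c \<in> U"
  obtain r \<eta> where h: "r > 0" "\<eta> > 0" "\<forall>t\<in>csect c r \<eta>. P t" using loc_D[OF assms c] by blast
  have "\<forall>t\<in>csect c r \<eta>. \<exists>e>0. \<forall>x\<in>ball t e. P x"
  proof
    fix t assume t: "t \<in> csect c r \<eta>"
    then obtain e where "e > 0" "ball t e \<subseteq> csect c r \<eta>" using open_csect open_contains_ball by blast
    then show "\<exists>e>0. \<forall>x\<in>ball t e. P x" using h by blast
  qed
  then show "\<exists>r>0. \<exists>\<eta>>0. \<forall>t\<in>csect c r \<eta>. \<exists>e>0. \<forall>x\<in>ball t e. P x" using h by blast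
qed

lemma holo_iff:
  assumes U: "U \<subseteq> sphere 0 1"
  shows "holo_section U f \<longleftrightarrow> loc U (\<lambda>t. f field_differentiable (at t))"
proof
  assume "holo_section U f"
  then obtain \<Omega> where o: "sector_nbhd U \<Omega>" "f holomorphic_on \<Omega>" unfolding holo_section_def by blast
  then have "open \<Omega>" "loc U (\<lambda>t. t \<in> \<Omega>)" using sector_iff[OF U] by auto
  show "loc U (\<lambda>t. f field_differentiable (at t))"
    by (rule loc_mono[OF \<open>loc U (\<lambda>t. t \<in> \<Omega>)\<close>]) (use o(2) \<open>open \<Omega>\<close> holomorphic_on_imp_differentiable_at in blast)
next
  assume "loc U (\<lambda>t. f field_differentiable (at t))"
  then obtain \<Omega> where o: "sector_nbhd U \<Omega>" "\<forall>t\<in>\<Omega>. f field_differentiable (at t)" using loc_union[OF U] by blast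
  then have "f holomorphic_on \<Omega>"
    by (simp add: field_differentiable_at_within holomorphic_on_def)
  then show "holo_section U f" using o unfolding holo_section_def by blast
qed

lemma per_iff:
  assumes U: "U \<subseteq> sphere 0 1"
  shows "per_section U f \<longleftrightarrow> loc U (\<lambda>t. f field_differentiable (at t) \<and> f (t / (1 + t)) = f t)"
  unfolding per_section_def holo_iff[OF U] germ_eq_iff[OF U]
proof
  assume "loc U (\<lambda>t. f field_differentiable at t) \<and> loc U (\<lambda>t. f (t / (1 + t)) = f t)"
  then show "loc U (\<lambda>t. f field_differentiable at t \<and> f (t / (1 + t)) = f t)" using loc_conj by blast
next
  assume a: "loc U (\<lambda>t. f field_differentiable at t \<and> f (t / (1 + t)) = f t)"
  have "loc U (\<lambda>t. f field_differentiable at t)" by (rule loc_mono[OF a]) blast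
  moreover have "loc U (\<lambda>t. f (t / (1 + t)) = f t)" by (rule loc_mono[OF a]) blast
  ultimately show "loc U (\<lambda>t. f field_differentiable at t) \<and> loc U (\<lambda>t. f (t / (1 + t)) = f t)" by blast
qed

lemma loc_phi:
  assumes P: "loc U P" shows "loc U (\<lambda>t. P (t / (1 + t)))"
  unfolding loc_def
proof
  fix c assume c: "c \<in> U"
  obtain r \<eta> where h: "r > 0" "\<eta> > 0" "\<forall>t\<in>csect c r \<eta>. P t" using loc_D[OF P c] by blast
  define r' where "r' = min (1/2) (min (r/2) (\<eta>/8))"
  have r': "r' > 0" using h by (simp add: r'_def)
  have "\<forall>t\<in>csect c r' (\<eta>/2). P (t / (1 + t))"
  proof
    fix t assume t: "t \<in> csect c r' (\<eta>/2)"
    have t0: "t \<noteq> 0" and tr: "norm t < r'" and ts: "norm (sgn t - c) < \<eta>/2" using t by (auto simp: csect_def)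
    have n1: "norm (1 + t) \<ge> 1/2"
    proof -
      have "1 \<le> norm (1 + t) + norm t" using norm_triangle_ineq4[of "1 + t" t] by simp
      then show ?thesis using tr by (simp add: r'_def)
    qed
    have t1: "1 + t \<noteq> 0" using n1 by auto
    have q0: "t / (1 + t) \<noteq> 0" using t0 t1 by simp
    have nq: "norm (t / (1 + t)) \<le> 2 * norm t"
    proof -
      have "norm (t / (1 + t)) = norm t / norm (1 + t)" by (simp add: norm_divide)
      also have "\<dots> \<le> norm t / (1/2)" using n1 by (intro divide_left_mono) auto
      finally show ?thesis by simp
    qed
    have "norm (sgn (t / (1 + t)) - sgn t) \<le> 2 * norm (t / (1 + t) - t) / norm t"
      by (rule sgn_ineq[OF t0])
    also have "t / (1 + t) - t = - (t * t) / (1 + t)" using t1 by (simp add: field_simps)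
    also have "2 * norm (- (t * t) / (1 + t)) / norm t = 2 * norm (t / (1 + t))"
      using t0 by (simp add: norm_divide norm_mult)
    also have "\<dots> \<le> 4 * norm t" using nq by simp
    finally have s1: "norm (sgn (t / (1 + t)) - sgn t) \<le> 4 * norm t" .
    have "norm (sgn (t / (1 + t)) - c) \<le> norm (sgn (t / (1 + t)) - sgn t) + norm (sgn t - c)"
      by (metis diff_add_cancel norm_triangle_ineq add_diff_eq)
    also have "\<dots> < \<eta>" using s1 ts tr by (simp add: r'_def)
    finally have "norm (sgn (t / (1 + t)) - c) < \<eta>" .
    moreover have "norm (t / (1 + t)) < r" using nq tr by (simp add: r'_def)
    ultimately have "t / (1 + t) \<in> csect c r \<eta>" using q0 by (simp add: csect_def)
    then show "P (t / (1 + t))" using h by blast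
  qed
  then show "\<exists>r>0. \<exists>\<eta>'>0. \<forall>t\<in>csect c r \<eta>'. P (t / (1 + t))" using r' h(2)
    by (intro exI[of _ r'] conjI exI[of _ "\<eta>/2"]) auto
qed

lemma per_transfer:
  assumes U: "U \<subseteq> sphere 0 1" and p: "per_section U f" and e: "loc U (\<lambda>t. f t = g t)"
  shows "per_section U g"
proof -
  have a: "loc U (\<lambda>t. f field_differentiable (at t) \<and> f (t / (1 + t)) = f t)" using p per_iff[OF U] by blast
  have b: "loc U (\<lambda>t. \<exists>e>0. \<forall>x\<in>ball t e. f x = g x)" using loc_open[OF e] .
  have c: "loc U (\<lambda>t. f (t / (1 + t)) = g (t / (1 + t)))" using loc_phi[OF e] .
  have "loc U (\<lambda>t. g field_differentiable (at t) \<and> g (t / (1 + t)) = g t)"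
  proof (rule loc_mono[OF loc_conj[OF loc_conj[OF a b] c]])
    fix t assume "((f field_differentiable at t \<and> f (t / (1 + t)) = f t) \<and>
       (\<exists>e>0. \<forall>x\<in>ball t e. f x = g x)) \<and> f (t / (1 + t)) = g (t / (1 + t))"
    then obtain e where h: "f field_differentiable at t" "f (t / (1 + t)) = f t" "e > 0" "\<forall>x\<in>ball t e. f x = g x"
      "f (t / (1 + t)) = g (t / (1 + t))" by blast
    have "g field_differentiable at t"
      using field_differentiable_transform_within[of e t UNIV f g] h by (auto simp: dist_commute)
    moreover have "g (t / (1 + t)) = g t" using h by auto
    ultimately show "g field_differentiable at t \<and> g (t / (1 + t)) = g t" by blast
  qed
  then show ?thesis using per_iff[OF U] by blast
qed

definition modb :: "complex set \<Rightarrow> (complex \<Rightarrow> complex) \<Rightarrow> bool" where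
  "modb U f \<longleftrightarrow> (\<forall>c\<in>U. \<exists>r>0. \<exists>\<eta>>0. \<exists>C N. \<forall>t\<in>csect c r \<eta>. norm (f t) \<le> C * norm t powr (- N))"

definition rapb :: "complex set \<Rightarrow> (complex \<Rightarrow> complex) \<Rightarrow> bool" where
  "rapb U f \<longleftrightarrow> (\<forall>c\<in>U. \<exists>r>0. \<exists>\<eta>>0. \<forall>N::nat. \<exists>C. \<forall>t\<in>csect c r \<eta>. norm (f t) \<le> C * norm t ^ N)"

lemma moderate_iff:
  assumes U: "U \<subseteq> sphere 0 1"
  shows "moderate_section U f \<longleftrightarrow> holo_section U f \<and> modb U f"
proof
  assume m: "moderate_section U f"
  have "\<exists>r>0. \<exists>\<eta>>0. \<exists>C N. \<forall>t\<in>csect c r \<eta>. norm (f t) \<le> C * norm t powr (- N)" if c: "c \<in> U" for c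
  proof -
    have nc: "norm c = 1" using U c by auto
    define \<theta> where "\<theta> = Arg c"
    have ct: "cis \<theta> = c" using unit_cis_Arg[OF nc] by (simp add: \<theta>_def)
    have "cis \<theta> \<in> U" using c ct by simp
    then have "\<exists>\<epsilon>>0. \<exists>r>0. \<exists>C N. \<forall>\<rho> \<phi>. 0 < \<rho> \<and> \<rho> < r \<and> \<bar>\<phi> - \<theta>\<bar> \<le> \<epsilon>
         \<longrightarrow> norm (f (complex_of_real \<rho> * cis \<phi>)) \<le> C * \<rho> powr (- N)" using m unfolding moderate_section_def by blast
    then obtain \<epsilon> r C N where re: "\<epsilon> > 0" "r > 0" "\<forall>\<rho> \<phi>. 0 < \<rho> \<and> \<rho> < r \<and> \<bar>\<phi> - \<theta>\<bar> \<le> \<epsilon>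
         \<longrightarrow> norm (f (complex_of_real \<rho> * cis \<phi>)) \<le> C * \<rho> powr (- N)"
      by blast
    obtain \<eta> where \<eta>: "\<eta> > 0" "\<forall>t \<in> csect (cis \<theta>) r \<eta>. \<exists>\<phi>. t = complex_of_real (norm t) * cis \<phi> \<and> \<bar>\<phi> - \<theta>\<bar> < \<epsilon>"
      using csect_in_angle[OF re(1)] by blast
    have "\<forall>t\<in>csect c r \<eta>. norm (f t) \<le> C * norm t powr (- N)"
    proof
      fix t assume t: "t \<in> csect c r \<eta>"
      then obtain \<phi> where p: "t = complex_of_real (norm t) * cis \<phi>" "\<bar>\<phi> - \<theta>\<bar> < \<epsilon>" using \<eta> ct by auto
      moreover have "0 < norm t" "norm t < r" using t by (auto simp: csect_def)
      ultimately have "norm (f (complex_of_real (norm t) * cis \<phi>)) \<le> C * norm t powr (- N)"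
        using re(3) by (meson less_imp_le)
      then show "norm (f t) \<le> C * norm t powr (- N)" using p(1) by simp
    qed
    then show ?thesis using re \<eta> by blast
  qed
  then have "modb U f" unfolding modb_def by blast
  moreover have "holo_section U f" using m by (simp add: moderate_section_def)
  ultimately show "holo_section U f \<and> modb U f" by blast
next
  assume h: "holo_section U f \<and> modb U f"
  have "\<exists>\<epsilon>>0. \<exists>r>0. \<exists>C N. \<forall>\<rho> \<phi>. 0 < \<rho> \<and> \<rho> < r \<and> \<bar>\<phi> - \<theta>\<bar> \<le> \<epsilon>
         \<longrightarrow> norm (f (complex_of_real \<rho> * cis \<phi>)) \<le> C * \<rho> powr (- N)" if "cis \<theta> \<in> U" for \<theta>
  proof -
    have "modb U f" using h by blast
    then have "\<exists>r>0. \<exists>\<eta>>0. \<exists>C N. \<forall>t\<in>csect (cis \<theta>) r \<eta>. norm (f t) \<le> C * norm t powr (- N)"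
      using that unfolding modb_def by blast
    then obtain r \<eta> C N where b: "r > 0" "\<eta> > 0" "\<forall>t\<in>csect (cis \<theta>) r \<eta>. norm (f t) \<le> C * norm t powr (- N)"
      by blast
    have "\<forall>\<rho> \<phi>. 0 < \<rho> \<and> \<rho> < r \<and> \<bar>\<phi> - \<theta>\<bar> \<le> \<eta>/2 \<longrightarrow> norm (f (complex_of_real \<rho> * cis \<phi>)) \<le> C * \<rho> powr (- N)"
    proof (intro allI impI)
      fix \<rho> \<phi> assume a: "0 < \<rho> \<and> \<rho> < r \<and> \<bar>\<phi> - \<theta>\<bar> \<le> \<eta>/2"
      then have "complex_of_real \<rho> * cis \<phi> \<in> csect (cis \<theta>) r \<eta>" using b(2) by (intro angle_in_csect) (auto simp del: of_real_mult)
      then have "norm (f (complex_of_real \<rho> * cis \<phi>)) \<le> C * norm (complex_of_real \<rho> * cis \<phi>) powr (- N)" using b(3) by blast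
      moreover have "norm (complex_of_real \<rho> * cis \<phi>) = \<rho>" using a by (simp add: norm_mult)
      ultimately show "norm (f (complex_of_real \<rho> * cis \<phi>)) \<le> C * \<rho> powr (- N)" by simp
    qed
    moreover have "\<eta>/2 > 0" using b by simp
    ultimately show ?thesis using b(1) by blast
  qed
  moreover have "holo_section U f" using h by blast
  ultimately show "moderate_section U f" unfolding moderate_section_def by blast
qed

lemma rapid_iff:
  assumes U: "U \<subseteq> sphere 0 1"
  shows "rapid_section U f \<longleftrightarrow> holo_section U f \<and> rapb U f"
proof
  assume m: "rapid_section U f"
  have "\<exists>r>0. \<exists>\<eta>>0. \<forall>N::nat. \<exists>C. \<forall>t\<in>csect c r \<eta>. norm (f t) \<le> C * norm t ^ N" if c: "c \<in> U" for c
  proof -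
    have nc: "norm c = 1" using U c by auto
    define \<theta> where "\<theta> = Arg c"
    have ct: "cis \<theta> = c" using unit_cis_Arg[OF nc] by (simp add: \<theta>_def)
    have "cis \<theta> \<in> U" using c ct by simp
    then have "\<exists>\<epsilon>>0. \<exists>r>0. \<forall>N::nat. \<exists>C. \<forall>\<rho> \<phi>. 0 < \<rho> \<and> \<rho> < r \<and> \<bar>\<phi> - \<theta>\<bar> \<le> \<epsilon>
         \<longrightarrow> norm (f (complex_of_real \<rho> * cis \<phi>)) \<le> C * \<rho> ^ N" using m unfolding rapid_section_def by blast
    then obtain \<epsilon> r where re: "\<epsilon> > 0" "r > 0" "\<forall>N::nat. \<exists>C. \<forall>\<rho> \<phi>. 0 < \<rho> \<and> \<rho> < r \<and> \<bar>\<phi> - \<theta>\<bar> \<le> \<epsilon>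
         \<longrightarrow> norm (f (complex_of_real \<rho> * cis \<phi>)) \<le> C * \<rho> ^ N"
      by blast
    obtain \<eta> where \<eta>: "\<eta> > 0" "\<forall>t \<in> csect (cis \<theta>) r \<eta>. \<exists>\<phi>. t = complex_of_real (norm t) * cis \<phi> \<and> \<bar>\<phi> - \<theta>\<bar> < \<epsilon>"
      using csect_in_angle[OF re(1)] by blast
    have "\<exists>C. \<forall>t\<in>csect c r \<eta>. norm (f t) \<le> C * norm t ^ N" for N :: nat
    proof -
      obtain C where C: "\<forall>\<rho> \<phi>. 0 < \<rho> \<and> \<rho> < r \<and> \<bar>\<phi> - \<theta>\<bar> \<le> \<epsilon>
         \<longrightarrow> norm (f (complex_of_real \<rho> * cis \<phi>)) \<le> C * \<rho> ^ N" using re(3) by blast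
      have "\<forall>t\<in>csect c r \<eta>. norm (f t) \<le> C * norm t ^ N"
      proof
        fix t assume t: "t \<in> csect c r \<eta>"
        then obtain \<phi> where p: "t = complex_of_real (norm t) * cis \<phi>" "\<bar>\<phi> - \<theta>\<bar> < \<epsilon>" using \<eta> ct by auto
        moreover have "0 < norm t" "norm t < r" using t by (auto simp: csect_def)
        ultimately have "norm (f (complex_of_real (norm t) * cis \<phi>)) \<le> C * norm t ^ N"
          using C by (meson less_imp_le)
        then show "norm (f t) \<le> C * norm t ^ N" using p(1) by simp
      qed
      then show ?thesis by blast
    qed
    then show ?thesis using re \<eta> by blast
  qed
  then have "rapb U f" unfolding rapb_def by blast
  moreover have "holo_section U f" using m by (simp add: rapid_section_def)
  ultimately show "holo_section U f \<and> rapb U f" by blast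
next
  assume h: "holo_section U f \<and> rapb U f"
  have "\<exists>\<epsilon>>0. \<exists>r>0. \<forall>N::nat. \<exists>C. \<forall>\<rho> \<phi>. 0 < \<rho> \<and> \<rho> < r \<and> \<bar>\<phi> - \<theta>\<bar> \<le> \<epsilon>
         \<longrightarrow> norm (f (complex_of_real \<rho> * cis \<phi>)) \<le> C * \<rho> ^ N" if "cis \<theta> \<in> U" for \<theta>
  proof -
    have "rapb U f" using h by blast
    then have "\<exists>r>0. \<exists>\<eta>>0. \<forall>N::nat. \<exists>C. \<forall>t\<in>csect (cis \<theta>) r \<eta>. norm (f t) \<le> C * norm t ^ N"
      using that unfolding rapb_def by blast
    then obtain r \<eta> where b: "r > 0" "\<eta> > 0" "\<forall>N::nat. \<exists>C. \<forall>t\<in>csect (cis \<theta>) r \<eta>. norm (f t) \<le> C * norm t ^ N"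
      by blast
    have "\<exists>C. \<forall>\<rho> \<phi>. 0 < \<rho> \<and> \<rho> < r \<and> \<bar>\<phi> - \<theta>\<bar> \<le> \<eta>/2 \<longrightarrow> norm (f (complex_of_real \<rho> * cis \<phi>)) \<le> C * \<rho> ^ N" for N :: nat
    proof -
      obtain C where C: "\<forall>t\<in>csect (cis \<theta>) r \<eta>. norm (f t) \<le> C * norm t ^ N" using b(3) by blast
      have "\<forall>\<rho> \<phi>. 0 < \<rho> \<and> \<rho> < r \<and> \<bar>\<phi> - \<theta>\<bar> \<le> \<eta>/2 \<longrightarrow> norm (f (complex_of_real \<rho> * cis \<phi>)) \<le> C * \<rho> ^ N"
      proof (intro allI impI)
        fix \<rho> \<phi> assume a: "0 < \<rho> \<and> \<rho> < r \<and> \<bar>\<phi> - \<theta>\<bar> \<le> \<eta>/2"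
        then have "complex_of_real \<rho> * cis \<phi> \<in> csect (cis \<theta>) r \<eta>" using b(2) by (intro angle_in_csect) (auto simp del: of_real_mult)
        then have "norm (f (complex_of_real \<rho> * cis \<phi>)) \<le> C * norm (complex_of_real \<rho> * cis \<phi>) ^ N" using C by blast
        moreover have "norm (complex_of_real \<rho> * cis \<phi>) = \<rho>" using a by (simp add: norm_mult)
        ultimately show "norm (f (complex_of_real \<rho> * cis \<phi>)) \<le> C * \<rho> ^ N" by simp
      qed
      then show ?thesis by blast
    qed
    then have "\<forall>N::nat. \<exists>C. \<forall>\<rho> \<phi>. 0 < \<rho> \<and> \<rho> < r \<and> \<bar>\<phi> - \<theta>\<bar> \<le> \<eta>/2 \<longrightarrow> norm (f (complex_of_real \<rho> * cis \<phi>)) \<le> C * \<rho> ^ N" by blast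
    moreover have "\<eta>/2 > 0" using b by simp
    ultimately show ?thesis using b(1) by blast
  qed
  moreover have "holo_section U f" using h by blast
  ultimately show "rapid_section U f" unfolding rapid_section_def by blast
qed

lemma modb_transfer:
  assumes m: "modb U f" and e: "loc U (\<lambda>t. f t = g t)" shows "modb U g"
  unfolding modb_def
proof
  fix c assume c: "c \<in> U"
  obtain r \<eta> C N where b: "r > 0" "\<eta> > 0" "\<forall>t\<in>csect c r \<eta>. norm (f t) \<le> C * norm t powr (- N)"
    using m c unfolding modb_def by blast
  obtain r' \<eta>' where b': "r' > 0" "\<eta>' > 0" "r' \<le> r" "\<eta>' \<le> \<eta>" "\<forall>t\<in>csect c r' \<eta>'. f t = g t"
    using loc_shrink[OF e c b(1,2)] by blast
  have sub: "csect c r' \<eta>' \<subseteq> csect c r \<eta>" using b' by (intro csect_mono)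
  have "\<forall>t\<in>csect c r' \<eta>'. norm (g t) \<le> C * norm t powr (- N)"
  proof
    fix t assume t: "t \<in> csect c r' \<eta>'"
    then have "norm (f t) \<le> C * norm t powr (- N)" using sub b(3) by blast
    then show "norm (g t) \<le> C * norm t powr (- N)" using b'(5) t by simp
  qed
  then show "\<exists>r>0. \<exists>\<eta>>0. \<exists>C N. \<forall>t\<in>csect c r \<eta>. norm (g t) \<le> C * norm t powr (- N)"
    using b' by blast
qed

lemma rapb_transfer:
  assumes m: "rapb U f" and e: "loc U (\<lambda>t. f t = g t)" shows "rapb U g"
  unfolding rapb_def
proof
  fix c assume c: "c \<in> U"
  obtain r \<eta> where b: "r > 0" "\<eta> > 0" "\<forall>N::nat. \<exists>C. \<forall>t\<in>csect c r \<eta>. norm (f t) \<le> C * norm t ^ N"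
    using m c unfolding rapb_def by blast
  obtain r' \<eta>' where b': "r' > 0" "\<eta>' > 0" "r' \<le> r" "\<eta>' \<le> \<eta>" "\<forall>t\<in>csect c r' \<eta>'. f t = g t"
    using loc_shrink[OF e c b(1,2)] by blast
  have sub: "csect c r' \<eta>' \<subseteq> csect c r \<eta>" using b' by (intro csect_mono)
  have "\<exists>C. \<forall>t\<in>csect c r' \<eta>'. norm (g t) \<le> C * norm t ^ N" for N
  proof -
    obtain C where C: "\<forall>t\<in>csect c r \<eta>. norm (f t) \<le> C * norm t ^ N" using b(3) by blast
    have "\<forall>t\<in>csect c r' \<eta>'. norm (g t) \<le> C * norm t ^ N"
    proof
      fix t assume t: "t \<in> csect c r' \<eta>'"
      then have "norm (f t) \<le> C * norm t ^ N" using sub C by blast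
      then show "norm (g t) \<le> C * norm t ^ N" using b'(5) t by simp
    qed
    then show ?thesis by blast
  qed
  then show "\<exists>r>0. \<exists>\<eta>>0. \<forall>N::nat. \<exists>C. \<forall>t\<in>csect c r \<eta>. norm (g t) \<le> C * norm t ^ N"
    using b' by blast
qed

lemma rapb_modb: "rapb U f \<Longrightarrow> modb U f"
  unfolding rapb_def modb_def
proof
  fix c assume "\<forall>c\<in>U. \<exists>r>0. \<exists>\<eta>>0. \<forall>N::nat. \<exists>C. \<forall>t\<in>csect c r \<eta>. cmod (f t) \<le> C * cmod t ^ N" "c \<in> U"
  then obtain r \<eta> where b: "r > 0" "\<eta> > 0" "\<forall>N::nat. \<exists>C. \<forall>t\<in>csect c r \<eta>. norm (f t) \<le> C * norm t ^ N" by blast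
  obtain C where "\<forall>t\<in>csect c r \<eta>. norm (f t) \<le> C * norm t ^ 0" using b(3) by blast
  then have "\<forall>t\<in>csect c r \<eta>. norm (f t) \<le> C * norm t powr (- 0)" by (auto simp: csect_def)
  then show "\<exists>r>0. \<exists>\<eta>>0. \<exists>C N. \<forall>t\<in>csect c r \<eta>. cmod (f t) \<le> C * cmod t powr - N" using b by blast
qed



definition W :: "real \<Rightarrow> complex \<Rightarrow> complex" where
  "W \<sigma> s = exp (complex_of_real \<sigma> * (2 * complex_of_real pi * \<i> * s))"

lemma W_ne0 [simp]: "W \<sigma> s \<noteq> 0" by (simp add: W_def)

lemma W_add: "W \<sigma> (a + b) = W \<sigma> a * W \<sigma> b"
  by (simp add: W_def distrib_left exp_add)

lemma W_int:
  assumes "\<sigma> \<in> {1,-1}" shows "W \<sigma> (of_int n) = 1"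
proof -
  have "exp (complex_of_real \<sigma> * (2 * complex_of_real pi * \<i> * of_int n)) = 1"
  proof (cases "\<sigma> = 1")
    case True
    then show ?thesis unfolding exp_eq_1 by (intro conjI exI[of _ n]) simp_all
  next
    case False
    then have "\<sigma> = -1" using assms by auto
    then show ?thesis unfolding exp_eq_1 by (intro conjI exI[of _ "-n"]) simp_all
  qed
  then show ?thesis by (simp add: W_def)
qed

lemma W_shift1:
  assumes "\<sigma> \<in> {1,-1}" shows "W \<sigma> (s + 1) = W \<sigma> s"
  using W_add[of \<sigma> s 1] W_int[OF assms, of 1] by simp

lemma W_eq:
  assumes "\<sigma> \<in> {1,-1}" "W \<sigma> s1 = W \<sigma> s2"
  shows "\<exists>n::int. s1 = s2 + of_int n"
proof -
  from assms(2) obtain n :: int where n: "complex_of_real \<sigma> * (2 * complex_of_real pi * \<i> * s1)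
     = complex_of_real \<sigma> * (2 * complex_of_real pi * \<i> * s2) + (of_int (2 * n) * pi) * \<i>"
    unfolding W_def exp_eq by blast
  have "complex_of_real \<sigma> * (2 * complex_of_real pi * \<i> * (s1 - s2)) = (of_int (2 * n) * pi) * \<i>"
    using n by (simp add: algebra_simps)
  then have "(2 * complex_of_real pi * \<i>) * (complex_of_real \<sigma> * (s1 - s2) - of_int n) = 0"
    by (simp add: algebra_simps)
  then have e: "complex_of_real \<sigma> * (s1 - s2) = of_int n"
    by simp
  show ?thesis
  proof (cases "\<sigma> = 1")
    case True
    then show ?thesis using e by (intro exI[of _ n]) (simp add: algebra_simps)
  next
    case False
    then have "\<sigma> = -1" using assms(1) by auto
    then show ?thesis using e by (intro exI[of _ "-n"]) (simp add: algebra_simps)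
  qed
qed

lemma norm_W: "norm (W \<sigma> s) = exp (- \<sigma> * 2 * pi * Im s)"
  by (simp add: W_def)

lemma holomorphic_W [holomorphic_intros]: "W \<sigma> holomorphic_on S"
  unfolding W_def by (intro holomorphic_intros)

lemma continuous_on_W: "continuous_on S (W \<sigma>)"
  using holomorphic_W holomorphic_on_imp_continuous_on by blast

lemma convex_int_point:
  fixes s :: complex
  assumes "convex D" "s \<in> D" "s + of_nat n \<in> D" "k \<le> n"
  shows "s + of_nat k \<in> D"
proof (cases "n = 0")
  case True then show ?thesis using assms by simp
next
  case False
  define u where "u = real k / real n"
  have u: "0 \<le> u" "u \<le> 1" using assms(4) False by (auto simp: u_def)
  have "(1 - u) *\<^sub>R s + u *\<^sub>R (s + of_nat n) \<in> D"
    using convexD[OF assms(1) assms(2) assms(3), of "1 - u" u] u by simp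
  moreover have "(1 - u) *\<^sub>R s + u *\<^sub>R (s + of_nat n) = s + of_nat k"
    using False by (simp add: u_def scaleR_conv_of_real field_simps)
  ultimately show ?thesis by simp
qed

lemma chain_eq:
  assumes "\<And>k. k < n \<Longrightarrow> F (s + of_nat k + 1) = F (s + of_nat k)"
  shows "F (s + of_nat n) = (F s :: complex)"
  using assms
proof (induction n)
  case 0 then show ?case by simp
next
  case (Suc n)
  have "s + of_nat (Suc n) = s + of_nat n + 1" by (simp add: algebra_simps)
  then have "F (s + of_nat (Suc n)) = F (s + of_nat n + 1)" by metis
  also have "\<dots> = F (s + of_nat n)" using Suc.prems by simp
  also have "\<dots> = F s" using Suc by simp
  finally show ?case .
qed

lemma descent_wd:
  assumes \<sigma>: "\<sigma> \<in> {1,-1}" and D: "convex D"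
    and per: "\<And>s. s \<in> D \<Longrightarrow> s + 1 \<in> D \<Longrightarrow> F (s + 1) = (F s :: complex)"
    and s: "s1 \<in> D" "s2 \<in> D" "W \<sigma> s1 = W \<sigma> s2"
  shows "F s1 = F s2"
proof -
  have main: "F (a + of_nat m) = F a" if "a \<in> D" "a + of_nat m \<in> D" for a m
  proof (rule chain_eq)
    fix k assume k: "k < m"
    have A: "a + of_nat k \<in> D" using convex_int_point[OF D that] k by simp
    have "a + of_nat (Suc k) \<in> D" using convex_int_point[OF D that, of "Suc k"] k by simp
    moreover have "a + of_nat (Suc k) = a + of_nat k + 1" by (simp add: algebra_simps)
    ultimately have B: "a + of_nat k + 1 \<in> D" by metis
    from A B show "F (a + of_nat k + 1) = F (a + of_nat k)" using per by blast
  qed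
  obtain n :: int where n: "s1 = s2 + of_int n" using W_eq[OF \<sigma> s(3)] by blast
  show ?thesis
  proof (cases "n \<ge> 0")
    case True
    then have "s1 = s2 + of_nat (nat n)" using n by simp
    then show ?thesis using main[of s2 "nat n"] s by simp
  next
    case False
    then have "s2 = s1 + of_nat (nat (-n))" using n by simp
    then show ?thesis using main[of s1 "nat (-n)"] s by simp
  qed
qed

lemma local_inverse:
  assumes \<sigma>: "\<sigma> \<in> {1,-1}"
  shows "\<exists>L. L holomorphic_on ball (W \<sigma> s0) (norm (W \<sigma> s0)) \<and> L (W \<sigma> s0) = s0 \<and>
           (\<forall>z\<in>ball (W \<sigma> s0) (norm (W \<sigma> s0)). W \<sigma> (L z) = z)"
proof -
  define z0 where "z0 = W \<sigma> s0"
  have z0: "z0 \<noteq> 0" by (simp add: z0_def)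
  define k where "k = complex_of_real \<sigma> * (2 * complex_of_real pi * \<i>)"
  have k0: "k \<noteq> 0" using \<sigma> by (auto simp: k_def)
  define L where "L z = s0 + Ln (z / z0) / k" for z
  have re: "Re (z / z0) > 0" if "z \<in> ball z0 (norm z0)" for z
  proof -
    have "norm (z / z0 - 1) < 1"
    proof -
      have "z / z0 - 1 = (z - z0) / z0" using z0 by (simp add: field_simps)
      then show ?thesis using that z0 by (simp add: norm_divide dist_norm norm_minus_commute)
    qed
    then have "\<bar>Re (z / z0 - 1)\<bar> < 1" using abs_Re_le_cmod le_less_trans by blast
    then show ?thesis by simp
  qed
  have "(\<lambda>z. z / z0) holomorphic_on ball z0 (norm z0)" using z0 by (intro holomorphic_intros)
  moreover have "Ln holomorphic_on (\<lambda>z. z / z0) ` ball z0 (norm z0)"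
    by (rule holomorphic_on_Ln) (use re in \<open>force simp: complex_nonpos_Reals_iff\<close>)
  ultimately have "(Ln \<circ> (\<lambda>z. z / z0)) holomorphic_on ball z0 (norm z0)"
    by (rule holomorphic_on_compose)
  then have "(\<lambda>z. s0 + (Ln \<circ> (\<lambda>z. z / z0)) z / k) holomorphic_on ball z0 (norm z0)"
    using k0 by (intro holomorphic_on_add holomorphic_on_const holomorphic_on_divide) (auto simp: o_def)
  moreover have "L = (\<lambda>z. s0 + (Ln \<circ> (\<lambda>z. z / z0)) z / k)" by (rule ext) (simp add: L_def)
  ultimately have hL: "L holomorphic_on ball z0 (norm z0)" by simp
  have L0: "L z0 = s0" using z0 by (simp add: L_def)
  have "W \<sigma> (L z) = z" if "z \<in> ball z0 (norm z0)" for z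
  proof -
    have zz: "z / z0 \<noteq> 0" using re[OF that] by auto
    have "W \<sigma> (L z) = W \<sigma> s0 * exp (k * (Ln (z / z0) / k))"
      unfolding L_def W_add by (simp add: W_def k_def mult.assoc)
    also have "k * (Ln (z / z0) / k) = Ln (z / z0)" using k0 by simp
    also have "exp (Ln (z / z0)) = z / z0" using zz by simp
    finally show ?thesis using z0 by (simp add: z0_def[symmetric])
  qed
  then show ?thesis using hL L0 unfolding z0_def by blast
qed

lemma open_W_image:
  assumes \<sigma>: "\<sigma> \<in> {1,-1}" and D: "open D"
  shows "open (W \<sigma> ` D)"
  unfolding open_contains_ball
proof
  fix z0 assume "z0 \<in> W \<sigma> ` D"
  then obtain s0 where s0: "s0 \<in> D" "z0 = W \<sigma> s0" by blast
  obtain L where L: "L holomorphic_on ball z0 (norm z0)" "L z0 = s0" "\<forall>z\<in>ball z0 (norm z0). W \<sigma> (L z) = z"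
    using local_inverse[OF \<sigma>, of s0] s0(2) by blast
  obtain e where e: "e > 0" "ball s0 e \<subseteq> D" using D s0(1) open_contains_ball by blast
  have z0: "norm z0 > 0" using s0 by simp
  have "continuous (at z0) L"
    using L(1) z0 holomorphic_on_imp_continuous_on[OF L(1)] by (simp add: continuous_on_interior)
  then obtain d where d: "d > 0" "\<forall>z. dist z z0 < d \<longrightarrow> dist (L z) (L z0) < e"
    using e(1) unfolding continuous_at_eps_delta by blast
  have "ball z0 (min d (norm z0)) \<subseteq> W \<sigma> ` D"
  proof
    fix z assume z: "z \<in> ball z0 (min d (norm z0))"
    then have "L z \<in> ball s0 e" using d L(2) by (auto simp: dist_commute)
    then have "L z \<in> D" using e by blast
    moreover have "W \<sigma> (L z) = z" using L(3) z by auto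
    ultimately show "z \<in> W \<sigma> ` D" by (metis image_eqI)
  qed
  then show "\<exists>e>0. ball z0 e \<subseteq> W \<sigma> ` D" using d z0 by (intro exI[of _ "min d (norm z0)"]) auto
qed

lemma connected_W_image:
  assumes "convex D" shows "connected (W \<sigma> ` D)"
  using assms convex_connected connected_continuous_image continuous_on_W by blast

lemma descent:
  assumes \<sigma>: "\<sigma> \<in> {1,-1}" and D: "convex D" "open D" and F: "F holomorphic_on D"
    and per: "\<And>s. s \<in> D \<Longrightarrow> s + 1 \<in> D \<Longrightarrow> F (s + 1) = F s"
  shows "\<exists>g. g holomorphic_on (W \<sigma> ` D) \<and> (\<forall>s\<in>D. g (W \<sigma> s) = F s)"
proof -
  define g where "g z = F (SOME s. s \<in> D \<and> W \<sigma> s = z)" for z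
  have gW: "g (W \<sigma> s) = F s" if s: "s \<in> D" for s
  proof -
    have "\<exists>s'. s' \<in> D \<and> W \<sigma> s' = W \<sigma> s" using s by blast
    then have "(SOME s'. s' \<in> D \<and> W \<sigma> s' = W \<sigma> s) \<in> D \<and> W \<sigma> (SOME s'. s' \<in> D \<and> W \<sigma> s' = W \<sigma> s) = W \<sigma> s"
      by (rule someI_ex)
    then show ?thesis unfolding g_def using descent_wd[where F=F, OF \<sigma> D(1) per] s by blast
  qed
  have "g analytic_on (W \<sigma> ` D)"
    unfolding analytic_on_def
  proof
    fix z0 assume "z0 \<in> W \<sigma> ` D"
    then obtain s0 where s0: "s0 \<in> D" "z0 = W \<sigma> s0" by blast
    obtain L where L: "L holomorphic_on ball z0 (norm z0)" "L z0 = s0" "\<forall>z\<in>ball z0 (norm z0). W \<sigma> (L z) = z"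
      using local_inverse[OF \<sigma>, of s0] s0(2) by blast
    obtain e where e: "e > 0" "ball s0 e \<subseteq> D" using D(2) s0(1) open_contains_ball by blast
    have z0: "norm z0 > 0" using s0 by simp
    have "continuous (at z0) L"
      using L(1) z0 holomorphic_on_imp_continuous_on[OF L(1)] by (simp add: continuous_on_interior)
    then obtain d where d: "d > 0" "\<forall>z. dist z z0 < d \<longrightarrow> dist (L z) (L z0) < e"
      using e(1) unfolding continuous_at_eps_delta by blast
    define B where "B = ball z0 (min d (norm z0))"
    have LB: "L z \<in> D" "W \<sigma> (L z) = z" if "z \<in> B" for z
    proof -
      have "L z \<in> ball s0 e" using d L(2) that by (auto simp: B_def dist_commute)
      then show "L z \<in> D" using e by blast
      show "W \<sigma> (L z) = z" using L(3) that by (auto simp: B_def)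
    qed
    have "(F \<circ> L) holomorphic_on B"
    proof (rule holomorphic_on_compose_gen)
      show "L holomorphic_on B" using L(1) by (rule holomorphic_on_subset) (auto simp: B_def)
      show "F holomorphic_on D" by (rule F)
      show "L ` B \<subseteq> D" using LB by blast
    qed
    moreover have "(F \<circ> L) z = g z" if "z \<in> B" for z
      using gW[OF LB(1)[OF that]] LB(2)[OF that] by simp
    ultimately have "g holomorphic_on B" by (rule holomorphic_transform)
    then show "\<exists>\<epsilon>>0. g holomorphic_on ball z0 \<epsilon>" using d z0 unfolding B_def by (intro exI[of _ "min d (norm z0)"]) auto
  qed
  then show ?thesis using gW analytic_imp_holomorphic by blast
qed



definition Dc :: "complex \<Rightarrow> real \<Rightarrow> real \<Rightarrow> complex set" where
  "Dc c R \<kappa> = {s. R < Re (c * s) \<and> \<bar>Im (c * s)\<bar> < \<kappa> * Re (c * s)}"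

lemma convex_Dc: "convex (Dc c R \<kappa>)"
  unfolding convex_def
proof (intro ballI allI impI)
  fix x y u v assume x: "x \<in> Dc c R \<kappa>" and y: "y \<in> Dc c R \<kappa>" and u0: "0 \<le> u" and v0: "0 \<le> v" and uv1: "u + v = (1::real)"
  have uv: "0 \<le> u \<and> 0 \<le> v \<and> u + v = (1::real)" using u0 v0 uv1 by blast
  have re: "Re (c * (u *\<^sub>R x + v *\<^sub>R y)) = u * Re (c * x) + v * Re (c * y)"
    by (simp add: scaleR_conv_of_real algebra_simps)
  have im: "Im (c * (u *\<^sub>R x + v *\<^sub>R y)) = u * Im (c * x) + v * Im (c * y)"
    by (simp add: scaleR_conv_of_real algebra_simps)
  have x': "R < Re (c * x)" "\<bar>Im (c * x)\<bar> < \<kappa> * Re (c * x)" and y': "R < Re (c * y)" "\<bar>Im (c * y)\<bar> < \<kappa> * Re (c * y)"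
    using x y by (auto simp: Dc_def)
  have "u * R + v * R \<le> u * Re (c * x) + v * Re (c * y)"
    using uv x' y' by (intro add_mono mult_left_mono) auto
  moreover have "u * R + v * R = R" using uv by (simp add: distrib_right[symmetric])
  moreover have "u * Re (c * x) + v * Re (c * y) \<noteq> R \<or> R < u * Re (c * x) + v * Re (c * y)"
  proof (cases "u = 0")
    case True then show ?thesis using uv y' by auto
  next
    case False
    then have "u * R < u * Re (c * x)" using uv x' by auto
    moreover have "v * R \<le> v * Re (c * y)" using uv y' by (intro mult_left_mono) auto
    ultimately show ?thesis using \<open>u * R + v * R = R\<close> by linarith
  qed
  ultimately have A: "R < u * Re (c * x) + v * Re (c * y)" by linarith
  have "\<bar>u * Im (c * x) + v * Im (c * y)\<bar> \<le> u * \<bar>Im (c * x)\<bar> + v * \<bar>Im (c * y)\<bar>"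
    using uv by (metis abs_mult abs_of_nonneg abs_triangle_ineq)
  also have "\<dots> < u * (\<kappa> * Re (c * x)) + v * (\<kappa> * Re (c * y))"
  proof (cases "u = 0")
    case True then show ?thesis using uv y' by auto
  next
    case False
    then have "u * \<bar>Im (c * x)\<bar> < u * (\<kappa> * Re (c * x))" using uv x' by auto
    moreover have "v * \<bar>Im (c * y)\<bar> \<le> v * (\<kappa> * Re (c * y))" using uv y' by (intro mult_left_mono) auto
    ultimately show ?thesis by linarith
  qed
  also have "\<dots> = \<kappa> * (u * Re (c * x) + v * Re (c * y))" by (simp add: algebra_simps)
  finally have B: "\<bar>u * Im (c * x) + v * Im (c * y)\<bar> < \<kappa> * (u * Re (c * x) + v * Re (c * y))" .
  show "u *\<^sub>R x + v *\<^sub>R y \<in> Dc c R \<kappa>" unfolding Dc_def mem_Collect_eq re im using A B by blast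
qed

lemma open_Dc: "open (Dc c R \<kappa>)"
proof -
  have "Dc c R \<kappa> = {s. R < Re (c * s)} \<inter> {s. \<bar>Im (c * s)\<bar> < \<kappa> * Re (c * s)}"
    by (auto simp: Dc_def)
  moreover have "open {s. R < Re (c * s)}"
    by (rule open_Collect_less) (intro continuous_intros)+
  moreover have "open {s. \<bar>Im (c * s)\<bar> < \<kappa> * Re (c * s)}"
    by (rule open_Collect_less) (intro continuous_intros)+
  ultimately show ?thesis by auto
qed

lemma Dc_ne0: "s \<in> Dc c R \<kappa> \<Longrightarrow> R \<ge> 0 \<Longrightarrow> s \<noteq> 0"
  by (auto simp: Dc_def)

lemma Dc_nonempty: "R \<ge> 0 \<Longrightarrow> \<kappa> > 0 \<Longrightarrow> norm c = 1 \<Longrightarrow> cnj c * of_real (R + 1) \<in> Dc c R \<kappa>"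
proof -
  assume a: "R \<ge> 0" "\<kappa> > 0" "norm c = 1"
  have "c * cnj c = 1" using a(3) complex_norm_square[of c] by simp
  then have eq: "c * (cnj c * of_real (R + 1)) = of_real (R + 1)" by (simp add: mult.assoc[symmetric])
  show ?thesis unfolding Dc_def mem_Collect_eq eq using a by simp
qed

lemma sgn_cnj_unit: "norm c = 1 \<Longrightarrow> c * cnj c = 1"
  using complex_norm_square[of c] by simp

lemma sgn_inv_c:
  fixes c s :: complex
  assumes c: "norm c = 1" and s: "s \<noteq> 0"
  shows "norm (sgn (inverse s) - c) = norm (sgn (c * s) - 1)"
proof -
  have ns: "norm (sgn s) = 1" using s by (simp add: norm_sgn)
  have "sgn (inverse s) = cnj (sgn s)"
  proof -
    have "sgn (inverse s) = inverse s /\<^sub>R norm (inverse s)" by (simp add: sgn_div_norm)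
    also have "\<dots> = of_real (norm s) / s" using s by (simp add: scaleR_conv_of_real norm_inverse divide_inverse mult.commute)
    also have "\<dots> = cnj s / of_real (norm s)"
    proof -
      have "s * cnj s = of_real ((norm s)^2)" using complex_norm_square[of s] by simp
      then show ?thesis using s by (simp add: field_simps power2_eq_square)
    qed
    also have "\<dots> = cnj (sgn s)" by (simp add: sgn_div_norm scaleR_conv_of_real field_simps)
    finally show ?thesis .
  qed
  then have "norm (sgn (inverse s) - c) = norm (cnj (sgn s - cnj c))" by simp
  also have "\<dots> = norm (sgn s - cnj c)" by (rule complex_mod_cnj)
  also have "\<dots> = norm c * norm (sgn s - cnj c)" using c by simp
  also have "\<dots> = norm (c * (sgn s - cnj c))" by (simp only: norm_mult)
  also have "c * (sgn s - cnj c) = c * sgn s - 1" using sgn_cnj_unit[OF c] by (simp add: algebra_simps)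
  also have "c * sgn s = sgn (c * s)"
  proof -
    have "sgn c = c" using c by (simp add: sgn_div_norm)
    then show ?thesis by (simp add: sgn_mult)
  qed
  finally show ?thesis .
qed

lemma Dc_sub_csect:
  assumes c: "norm c = 1" and r: "r > 0" and \<eta>: "\<eta> > 0" and s: "s \<in> Dc c (1/r) (\<eta>/2)"
  shows "s \<noteq> 0" "inverse s \<in> csect c r \<eta>"
proof -
  define q where "q = c * s"
  have q: "1/r < Re q" "\<bar>Im q\<bar> < \<eta>/2 * Re q" using s by (auto simp: Dc_def q_def)
  have "1/r > 0" using r by simp
  then have a0: "Re q > 0" using q(1) by linarith
  show s0: "s \<noteq> 0" using a0 by (auto simp: q_def)
  have nq: "norm q = norm s" using c by (simp add: q_def norm_mult)
  have "Re q \<le> norm q" by (rule complex_Re_le_cmod)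
  then have ns: "1/r < norm s" using q(1) nq by linarith
  have ns0: "norm s > 0" using s0 by simp
  have "1 < r * norm s" using ns r by (simp add: divide_less_eq mult.commute)
  then have "1 / norm s < r" using ns0 by (simp add: divide_less_eq mult.commute)
  then have "norm (inverse s) < r" by (simp add: norm_inverse divide_inverse)
  moreover have "norm (sgn (inverse s) - c) < \<eta>"
  proof -
    have "norm (sgn (inverse s) - c) = norm (sgn q - 1)" unfolding q_def by (rule sgn_inv_c[OF c s0])
    also have "norm (sgn q - 1) = norm (sgn q - sgn (complex_of_real (Re q)))"
      using a0 by (simp add: sgn_of_real)
    also have "\<dots> \<le> 2 * norm (q - complex_of_real (Re q)) / norm (complex_of_real (Re q))"
      by (rule sgn_ineq) (use a0 in auto)
    also have "norm (q - complex_of_real (Re q)) = \<bar>Im q\<bar>"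
    proof -
      have "q - complex_of_real (Re q) = \<i> * of_real (Im q)" by (simp add: complex_eq_iff)
      then show ?thesis by (simp add: norm_mult)
    qed
    also have "2 * \<bar>Im q\<bar> / norm (complex_of_real (Re q)) < \<eta>"
      using q(2) a0 by (simp add: divide_less_eq)
    finally show ?thesis .
  qed
  moreover have "inverse s \<noteq> 0" using s0 by simp
  ultimately show "inverse s \<in> csect c r \<eta>" by (simp add: csect_def)
qed

lemma csect_sub_Dc:
  assumes c: "norm c = 1" and R: "R > 0" and \<kappa>: "\<kappa> > 0"
    and t: "t \<in> csect c (1 / (2 * R)) (min (1/2) (\<kappa>/2))"
  shows "inverse t \<in> Dc c R \<kappa>"
proof -
  have t0: "t \<noteq> 0" and tr: "norm t < 1 / (2 * R)" and ts: "norm (sgn t - c) < min (1/2) (\<kappa>/2)"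
    using t by (auto simp: csect_def)
  define q where "q = c * inverse t"
  define e where "e = sgn q"
  have q0: "q \<noteq> 0" using t0 c by (auto simp: q_def)
  have "norm q = norm c * norm (inverse t)" by (simp only: q_def norm_mult)
  then have nq: "norm q = 1 / norm t" using c by (simp add: norm_inverse divide_inverse)
  have nq2: "norm q > 2 * R" using tr t0 R unfolding nq by (simp add: field_simps)
  have "norm (e - 1) = norm (sgn (inverse (inverse t)) - c)"
    unfolding e_def q_def using sgn_inv_c[OF c, of "inverse t"] t0 by simp
  then have e1: "norm (e - 1) < min (1/2) (\<kappa>/2)" using ts by simp
  define n where "n = norm q"
  have qe: "q = of_real n * e" using q0 by (simp add: n_def e_def sgn_div_norm scaleR_conv_of_real)
  have "\<bar>Re e - 1\<bar> \<le> norm (e - 1)" using abs_Re_le_cmod[of "e - 1"] by simp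
  then have re: "Re e > 1/2" using e1 by linarith
  have "\<bar>Im e\<bar> \<le> norm (e - 1)" using abs_Im_le_cmod[of "e - 1"] by simp
  then have im: "\<bar>Im e\<bar> < \<kappa>/2" using e1 by linarith
  have Req: "Re q = norm q * Re e" unfolding n_def[symmetric] by (subst qe) simp
  have Imq: "Im q = norm q * Im e" unfolding n_def[symmetric] by (subst qe) simp
  have "R < Re q"
  proof -
    have "R < norm q * (1/2)" using nq2 by simp
    also have "\<dots> \<le> norm q * Re e" using re by (intro mult_left_mono) auto
    finally show ?thesis using Req by simp
  qed
  moreover have "\<bar>Im q\<bar> < \<kappa> * Re q"
  proof -
    have "\<bar>Im q\<bar> = norm q * \<bar>Im e\<bar>" using Imq by (simp add: abs_mult)
    also have "\<dots> < norm q * (\<kappa>/2)" using im q0 by (intro mult_strict_left_mono) auto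
    also have "\<dots> \<le> norm q * (\<kappa> * Re e)" using re \<kappa> by (intro mult_left_mono) auto
    also have "\<dots> = \<kappa> * Re q" using Req by simp
    finally show ?thesis .
  qed
  ultimately show ?thesis by (simp add: Dc_def q_def)
qed



lemma Im_inverse_norm: "Im (inverse t) = - Im t / (norm t)^2"
  by (simp add: cmod_power2)

lemma Im_sgn: "Im (sgn t) = Im t / norm t"
  by (simp add: sgn_div_norm divide_inverse mult.commute)

lemma cov_A:
  assumes \<sigma>: "\<sigma> \<in> {1,-1}" and c: "norm c = 1" and sc: "\<sigma> * Im c < 0" and R: "R > 0" and \<kappa>: "\<kappa> > 0"
  shows "\<exists>\<delta>>0. \<forall>z. 0 < norm z \<and> norm z < \<delta> \<longrightarrow>
           (\<exists>s\<in>Dc c R \<kappa>. W \<sigma> s = z \<and> norm s \<le> ln (1 / norm z) / (2 * pi * \<bar>Im c\<bar>) + 1/2)"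
proof -
  define b where "b = \<bar>Im c\<bar>"
  have b: "b > 0" using sc b_def by auto
  have sb: "\<sigma> * Im c = - b" using \<sigma> sc by (auto simp: b_def)
  define A0 where "A0 = R + 1 + 1/\<kappa>"
  define \<delta> where "\<delta> = exp (- (2 * pi * b * A0))"
  have "\<forall>z. 0 < norm z \<and> norm z < \<delta> \<longrightarrow> (\<exists>s\<in>Dc c R \<kappa>. W \<sigma> s = z \<and> norm s \<le> ln (1 / norm z) / (2 * pi * b) + 1/2)"
  proof (intro allI impI)
    fix z :: complex assume z: "0 < norm z \<and> norm z < \<delta>"
    define a where "a = ln (1 / norm z) / (2 * pi * b)"
    have dpos: "\<delta> > 0" by (simp add: \<delta>_def)
    have "ln (norm z) < ln \<delta>" using z dpos by (intro ln_less_cancel_iff[THEN iffD2]) auto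
    moreover have "ln \<delta> = - (2 * pi * b * A0)" by (simp add: \<delta>_def)
    ultimately have "ln (norm z) < - (2 * pi * b * A0)" by simp
    then have "2 * pi * b * A0 < ln (1 / norm z)" using z by (simp add: ln_div)
    then have aA: "A0 < a" using b by (simp add: a_def field_simps mult.commute)
    have "1/\<kappa> > 0" using \<kappa> by simp
    then have a0: "a > 0" using aA R unfolding A0_def by linarith
    define p where "p = W \<sigma> (cnj c * of_real a)"
    have np: "norm p = norm z"
    proof -
      have "norm p = exp (2 * pi * a * (\<sigma> * Im c))" by (simp add: p_def norm_W algebra_simps)
      also have "\<dots> = exp (- ln (1 / norm z))" using b by (simp add: sb a_def)
      also have "\<dots> = norm z" using z by (simp add: ln_div)
      finally show ?thesis .
    qed
    define e where "e = z / p"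
    have p0: "p \<noteq> 0" by (simp add: p_def)
    have ne: "norm e = 1" using np z by (simp add: e_def norm_divide)
    define d where "d = \<sigma> * Arg e / (2 * pi)"
    have d: "\<bar>d\<bar> \<le> 1/2"
    proof -
      have "\<bar>Arg e\<bar> \<le> pi" using Arg_bounded[of e] by auto
      moreover have "\<bar>\<sigma>\<bar> = 1" using \<sigma> by auto
      ultimately show ?thesis by (simp add: d_def abs_mult)
    qed
    have Wd: "W \<sigma> (of_real d) = e"
    proof -
      have ss: "\<sigma> * \<sigma> = 1" using \<sigma> by auto
      have "complex_of_real \<sigma> * (2 * complex_of_real pi * \<i> * complex_of_real d) = \<i> * of_real (\<sigma> * \<sigma> * Arg e)"
        by (simp add: d_def field_simps)
      then have "W \<sigma> (of_real d) = exp (\<i> * of_real (\<sigma> * \<sigma> * Arg e))" unfolding W_def by metis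
      also have "\<sigma> * \<sigma> * Arg e = Arg e" using ss by simp
      finally have "W \<sigma> (of_real d) = exp (\<i> * of_real (Arg e))" .
      also have "\<dots> = cis (Arg e)" by (simp add: cis_conv_exp)
      also have "\<dots> = e" by (rule unit_cis_Arg[OF ne])
      finally show ?thesis .
    qed
    define s where "s = cnj c * of_real a + of_real d"
    have Ws: "W \<sigma> s = z" using Wd p0 by (simp add: s_def W_add p_def[symmetric] e_def)
    have cs: "c * s = of_real a + c * of_real d"
      using sgn_cnj_unit[OF c] by (simp add: s_def algebra_simps mult.assoc[symmetric])
    have Rec: "\<bar>Re c\<bar> \<le> 1" "\<bar>Im c\<bar> \<le> 1" using abs_Re_le_cmod[of c] abs_Im_le_cmod[of c] c by auto
    have "\<bar>d\<bar> * \<bar>Re c\<bar> \<le> 1/2 * 1" by (rule mult_mono) (use d Rec in auto)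
    then have dre: "\<bar>d * Re c\<bar> \<le> 1/2" by (simp add: abs_mult)
    have "\<bar>d\<bar> * \<bar>Im c\<bar> \<le> 1/2 * 1" by (rule mult_mono) (use d Rec in auto)
    then have dim: "\<bar>d * Im c\<bar> \<le> 1/2" by (simp add: abs_mult)
    have re: "Re (c * s) = a + d * Re c" using cs by simp
    have im: "Im (c * s) = d * Im c" using cs by simp
    have "- (1/2) \<le> d * Re c" using dre by (simp add: abs_le_iff)
    then have "R < Re (c * s)" using re aA \<open>1/\<kappa> > 0\<close> unfolding A0_def by linarith
    moreover have "\<bar>Im (c * s)\<bar> < \<kappa> * Re (c * s)"
    proof -
      have "a - 1/2 > 1/2 + 1/\<kappa>" using aA R by (simp add: A0_def)
      then have "\<kappa> * (a - 1/2) > \<kappa> * (1/2 + 1/\<kappa>)" using \<kappa> by (intro mult_strict_left_mono) auto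
      also have "\<kappa> * (1/2 + 1/\<kappa>) = \<kappa>/2 + 1" using \<kappa> by (simp add: field_simps)
      finally have "\<kappa> * (a - 1/2) > 1/2" using \<kappa> by linarith
      moreover have "\<kappa> * (a - 1/2) \<le> \<kappa> * Re (c * s)" using re dre \<kappa> by (intro mult_left_mono) auto
      ultimately show ?thesis using im dim by linarith
    qed
    ultimately have sD: "s \<in> Dc c R \<kappa>" by (simp add: Dc_def)
    have "norm s \<le> norm (cnj c * of_real a) + norm (complex_of_real d)" unfolding s_def by (rule norm_triangle_ineq)
    also have "\<dots> = a + \<bar>d\<bar>" using c a0 by (simp add: norm_mult)
    also have "\<dots> \<le> a + 1/2" using d by simp
    finally show "\<exists>s\<in>Dc c R \<kappa>. W \<sigma> s = z \<and> norm s \<le> ln (1 / norm z) / (2 * pi * b) + 1/2"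
      using sD Ws by (auto simp: a_def)
  qed
  moreover have "\<delta> > 0" by (simp add: \<delta>_def)
  ultimately show ?thesis unfolding b_def by blast
qed

lemma cov_iii:
  assumes c: "c = 1 \<or> c = -1" and R: "R > 0" and \<kappa>: "\<kappa> > 0" and z: "z \<noteq> 0"
  shows "\<exists>s\<in>Dc c R \<kappa>. W 1 s = z"
proof -
  define s0 where "s0 = Ln z / (2 * complex_of_real pi * \<i>)"
  have Ws0: "W 1 s0 = z" using z by (simp add: W_def s0_def)
  define M where "M = R + \<bar>Re s0\<bar> + \<bar>Im s0\<bar> / \<kappa> + 1"
  define m where "m = \<lceil>M\<rceil>"
  have mM: "M \<le> of_int m" by (simp add: m_def)
  define n where "n = (if c = 1 then m else - m)"
  define s where "s = s0 + of_int n"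
  have Ws: "W 1 s = z" using Ws0 W_int[of 1 n] by (simp add: s_def W_add)
  have "Re (c * s) \<ge> M - \<bar>Re s0\<bar> \<and> \<bar>Im (c * s)\<bar> = \<bar>Im s0\<bar>"
    using c mM by (auto simp: s_def n_def)
  then have h: "Re (c * s) \<ge> R + \<bar>Im s0\<bar> / \<kappa> + 1" "\<bar>Im (c * s)\<bar> = \<bar>Im s0\<bar>" by (auto simp: M_def)
  have "\<bar>Im s0\<bar> / \<kappa> \<ge> 0" using \<kappa> by simp
  then have "R < Re (c * s)" using h by linarith
  moreover have "\<bar>Im (c * s)\<bar> < \<kappa> * Re (c * s)"
  proof -
    have "\<kappa> * (R + \<bar>Im s0\<bar> / \<kappa> + 1) \<le> \<kappa> * Re (c * s)" using h \<kappa> by (intro mult_left_mono) auto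
    moreover have "\<kappa> * (R + \<bar>Im s0\<bar> / \<kappa> + 1) = \<kappa> * R + \<bar>Im s0\<bar> + \<kappa>" using \<kappa> by (simp add: field_simps)
    moreover have "\<kappa> * R > 0" using \<kappa> R by simp
    ultimately show ?thesis using h \<kappa> by linarith
  qed
  ultimately show ?thesis using Ws by (auto simp: Dc_def)
qed

lemma est_W:
  assumes \<sigma>: "\<sigma> \<in> {1,-1}" and c: "norm c = 1" and sc: "\<sigma> * Im c < 0"
    and t: "t \<in> csect c r (\<bar>Im c\<bar>/2)"
  shows "norm (W \<sigma> (inverse t)) \<le> exp (- (pi * \<bar>Im c\<bar>) / norm t)"
proof -
  define b where "b = \<bar>Im c\<bar>"
  have sb: "\<sigma> * Im c = - b" using \<sigma> sc by (auto simp: b_def)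
  have t0: "t \<noteq> 0" and ts: "norm (sgn t - c) < b/2" using t by (auto simp: csect_def b_def)
  have nt: "norm t > 0" using t0 by simp
  have "\<bar>Im (sgn t) - Im c\<bar> \<le> norm (sgn t - c)" using abs_Im_le_cmod[of "sgn t - c"] by simp
  then have di: "\<bar>Im (sgn t) - Im c\<bar> < b/2" using ts by linarith
  have "\<sigma> * Im (sgn t) = \<sigma> * Im c + \<sigma> * (Im (sgn t) - Im c)" by (simp add: algebra_simps)
  also have "\<sigma> * (Im (sgn t) - Im c) \<le> \<bar>Im (sgn t) - Im c\<bar>" using \<sigma> by auto
  finally have si: "\<sigma> * Im (sgn t) < - b/2" using sb di by linarith
  have i1: "Im (inverse t) = - Im t / (norm t)^2" by (rule Im_inverse_norm)
  have i2: "Im t = norm t * Im (sgn t)" using nt by (simp add: Im_sgn)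
  have gen: "- \<sigma> * 2 * pi * (- (n * y) / n^2) = 2 * pi * (\<sigma> * y) / n" if "n > 0" for n y :: real
    using that by (simp add: power2_eq_square field_simps)
  have "- \<sigma> * 2 * pi * Im (inverse t) = 2 * pi * (\<sigma> * Im (sgn t)) / norm t"
    unfolding i1 i2 by (rule gen[OF nt])
  also have "\<dots> \<le> 2 * pi * (- b/2) / norm t"
    using si nt by (intro divide_right_mono mult_left_mono) auto
  also have "\<dots> = - (pi * b) / norm t" by simp
  finally have "- \<sigma> * 2 * pi * Im (inverse t) \<le> - (pi * b) / norm t" .
  then show ?thesis unfolding norm_W b_def[symmetric] by simp
qed

lemma est_small:
  assumes \<sigma>: "\<sigma> \<in> {1,-1}" and c: "norm c = 1" and sc: "\<sigma> * Im c < 0" and \<delta>: "\<delta> > 0"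
  shows "\<exists>r>0. \<forall>t\<in>csect c r (\<bar>Im c\<bar>/2). norm (W \<sigma> (inverse t)) < \<delta>"
proof -
  define b where "b = \<bar>Im c\<bar>"
  have b: "b > 0" using sc b_def by auto
  define r where "r = pi * b / (\<bar>ln \<delta>\<bar> + 1)"
  have r: "r > 0" using b by (simp add: r_def)
  have "norm (W \<sigma> (inverse t)) < \<delta>" if t: "t \<in> csect c r (b/2)" for t
  proof -
    have nt: "norm t > 0" "norm t < r" using t by (auto simp: csect_def)
    have "\<bar>ln \<delta>\<bar> + 1 < pi * b / norm t"
    proof -
      have "pi * b / r < pi * b / norm t" using nt b r by (intro divide_strict_left_mono) (auto intro: mult_pos_pos)
      moreover have "pi * b / r = \<bar>ln \<delta>\<bar> + 1" using b by (simp add: r_def)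
      ultimately show ?thesis by simp
    qed
    then have "- (pi * b) / norm t < ln \<delta>" by simp
    then have "exp (- (pi * b) / norm t) < exp (ln \<delta>)" by (simp only: exp_less_cancel_iff)
    then have "exp (- (pi * b) / norm t) < \<delta>" using \<delta> by simp
    moreover have "norm (W \<sigma> (inverse t)) \<le> exp (- (pi * b) / norm t)"
      using est_W[OF \<sigma> c sc] t by (simp add: b_def)
    ultimately show ?thesis by linarith
  qed
  then show ?thesis using r by (auto simp: b_def)
qed

lemma expb:
  assumes x: "x > 0" shows "exp (- x) \<le> (real N / x) ^ N"
proof (cases "N = 0")
  case True then show ?thesis using x by simp
next
  case False
  have "(1 + x / real N) ^ N \<le> exp x" by (rule exp_ge_one_plus_x_over_n_power_n) (use x False in auto)
  moreover have "(x / real N) ^ N \<le> (1 + x / real N) ^ N" using x by (intro power_mono) auto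
  ultimately have le: "(x / real N) ^ N \<le> exp x" by linarith
  have pos: "(x / real N) ^ N > 0" using x False by simp
  have "exp (- x) = inverse (exp x)" by (simp add: exp_minus)
  also have "\<dots> \<le> inverse ((x / real N) ^ N)" using le pos by (intro le_imp_inverse_le) auto
  also have "\<dots> = (real N / x) ^ N" by (simp only: power_inverse[symmetric] inverse_divide)
  finally show ?thesis .
qed

lemma rapid_W_bound:
  assumes \<sigma>: "\<sigma> \<in> {1,-1}" and c: "norm c = 1" and sc: "\<sigma> * Im c < 0"
    and t: "t \<in> csect c r (\<bar>Im c\<bar>/2)"
  shows "norm (W \<sigma> (inverse t)) \<le> (real N / (pi * \<bar>Im c\<bar>)) ^ N * norm t ^ N"
proof -
  have b: "\<bar>Im c\<bar> > 0" using sc by auto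
  have nt: "norm t > 0" using t by (auto simp: csect_def)
  have "norm (W \<sigma> (inverse t)) \<le> exp (- (pi * \<bar>Im c\<bar> / norm t))" using est_W[OF assms] by simp
  also have "\<dots> \<le> (real N / (pi * \<bar>Im c\<bar> / norm t)) ^ N" by (rule expb) (use b nt in auto)
  also have "\<dots> = (real N / (pi * \<bar>Im c\<bar>)) ^ N * norm t ^ N"
  proof -
    have "real N / (pi * \<bar>Im c\<bar> / norm t) = real N / (pi * \<bar>Im c\<bar>) * norm t" using nt b by (simp add: field_simps)
    then show ?thesis by (simp only: power_mult_distrib)
  qed
  finally show ?thesis .
qed



lemma local_descent:
  assumes \<sigma>: "\<sigma> \<in> {1,-1}" and c: "norm c = 1" and r: "r > 0" and \<eta>: "\<eta> > 0"
    and P: "\<forall>t\<in>csect c r \<eta>. f field_differentiable (at t) \<and> f (t / (1 + t)) = f t"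
  shows "\<exists>g. g holomorphic_on (W \<sigma> ` Dc c (1/r) (\<eta>/2)) \<and> (\<forall>s\<in>Dc c (1/r) (\<eta>/2). f (inverse s) = g (W \<sigma> s))"
proof -
  define D where "D = Dc c (1/r) (\<eta>/2)"
  have sD: "s \<noteq> 0" "inverse s \<in> csect c r \<eta>" if "s \<in> D" for s
    using Dc_sub_csect[OF c r \<eta>] that by (auto simp: D_def)
  have F: "(f \<circ> inverse) holomorphic_on D"
  proof -
    have "(f \<circ> inverse) field_differentiable (at s)" if s: "s \<in> D" for s
    proof (rule field_differentiable_compose)
      show "inverse field_differentiable at s" using sD(1)[OF s]
        by (simp add: field_differentiable_def) (metis DERIV_inverse power2_eq_square)
      show "f field_differentiable at (inverse s)" using P sD(2)[OF s] by blast
    qed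
    then show ?thesis by (simp add: field_differentiable_at_within holomorphic_on_def)
  qed
  have per: "(f \<circ> inverse) (s + 1) = (f \<circ> inverse) s" if "s \<in> D" "s + 1 \<in> D" for s
  proof -
    have s0: "s \<noteq> 0" "s + 1 \<noteq> 0" using sD(1) that by auto
    have "inverse s / (1 + inverse s) = inverse (s + 1)" using s0 by (simp add: field_simps)
    then show ?thesis using P sD(2)[OF that(1)] by auto
  qed
  obtain g where g: "g holomorphic_on (W \<sigma> ` D)" "\<forall>s\<in>D. g (W \<sigma> s) = (f \<circ> inverse) s"
    using descent[OF \<sigma> _ _ F per] convex_Dc open_Dc unfolding D_def by blast
  then show ?thesis unfolding D_def by auto
qed

lemma conn:
  assumes U: "U \<subseteq> sphere 0 1" "connected U"
    and \<sigma>: "\<sigma> \<in> {1,-1}"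
    and Pf: "loc U (\<lambda>t. f field_differentiable (at t) \<and> f (t / (1 + t)) = f t)"
    and G0: "g holomorphic_on G0"
    and inG0: "loc U (\<lambda>t. W \<sigma> (inverse t) \<in> G0)"
    and start: "c0 \<in> U" "r0 > 0" "\<eta>0 > 0" "\<forall>t\<in>csect c0 r0 \<eta>0. f t = g (W \<sigma> (inverse t))"
  shows "loc U (\<lambda>t. f t = g (W \<sigma> (inverse t)))"
proof -
  define Gd where "Gd = {c \<in> U. \<exists>r>0. \<exists>\<eta>>0. \<forall>t\<in>csect c r \<eta>. f t = g (W \<sigma> (inverse t))}"
  have O: "\<exists>e>0. \<forall>c'\<in>U. dist c' c < e \<longrightarrow> c' \<in> Gd" if c: "c \<in> Gd" for c
  proof -
    obtain r \<eta> where h: "r > 0" "\<eta> > 0" "\<forall>t\<in>csect c r \<eta>. f t = g (W \<sigma> (inverse t))"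
      using c unfolding Gd_def by blast
    have "c' \<in> Gd" if c': "c' \<in> U" "dist c' c < \<eta>/2" for c'
    proof -
      have "csect c' r (\<eta>/2) \<subseteq> csect c r \<eta>" using c' by (intro csect_shift) (simp add: dist_norm)
      then have "\<forall>t\<in>csect c' r (\<eta>/2). f t = g (W \<sigma> (inverse t))" using h(3) by blast
      moreover have "\<eta>/2 > 0" using h(2) by simp
      ultimately show ?thesis unfolding Gd_def using c'(1) h(1) by blast
    qed
    then show ?thesis using h(2) by (intro exI[of _ "\<eta>/2"]) auto
  qed
  have K: "\<exists>e>0. \<forall>c'\<in>U. dist c' c1 < e \<longrightarrow> c' \<in> Gd \<longrightarrow> c1 \<in> Gd" if c1: "c1 \<in> U" for c1
  proof -
    have nc1: "norm c1 = 1" using U(1) c1 by auto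
    obtain r1 \<eta>1 where h1: "r1 > 0" "\<eta>1 > 0"
      "\<forall>t\<in>csect c1 r1 \<eta>1. (f field_differentiable (at t) \<and> f (t / (1 + t)) = f t) \<and> W \<sigma> (inverse t) \<in> G0"
      using loc_D[OF loc_conj[OF Pf inG0] c1] by blast
    define D1 where "D1 = Dc c1 (1/r1) (\<eta>1/2)"
    obtain g1 where g1: "g1 holomorphic_on (W \<sigma> ` D1)" "\<forall>s\<in>D1. f (inverse s) = g1 (W \<sigma> s)"
      using local_descent[OF \<sigma> nc1 h1(1,2)] h1(3) unfolding D1_def by blast
    have sD1: "s \<noteq> 0" "inverse s \<in> csect c1 r1 \<eta>1" if "s \<in> D1" for s
      using Dc_sub_csect[OF nc1 h1(1,2)] that by (auto simp: D1_def)
    define r1' where "r1' = 1 / (2 * (1/r1))"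
    define \<eta>1' where "\<eta>1' = min (1/2) ((\<eta>1/2)/2)"
    have r1': "r1' > 0" using h1 by (simp add: r1'_def)
    have \<eta>1': "\<eta>1' > 0" using h1 by (simp add: \<eta>1'_def)
    have inD1: "inverse t \<in> D1" if "t \<in> csect c1 r1' \<eta>1'" for t
      using csect_sub_Dc[OF nc1, of "1/r1" "\<eta>1/2" t] h1 that by (simp add: D1_def r1'_def \<eta>1'_def)
    have E1G0: "W \<sigma> ` D1 \<subseteq> G0"
    proof
      fix z assume "z \<in> W \<sigma> ` D1"
      then obtain s where s: "s \<in> D1" "z = W \<sigma> s" by blast
      then have "W \<sigma> (inverse (inverse s)) \<in> G0" using h1(3) sD1(2)[OF s(1)] by blast
      then show "z \<in> G0" using s by simp
    qed
    have "c1 \<in> Gd" if c': "c' \<in> U" "dist c' c1 < \<eta>1'/2" "c' \<in> Gd" for c'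
    proof -
      have nc': "norm c' = 1" using U(1) c'(1) by auto
      obtain r' \<eta>' where h': "r' > 0" "\<eta>' > 0" "\<forall>t\<in>csect c' r' \<eta>'. f t = g (W \<sigma> (inverse t))"
        using c'(3) unfolding Gd_def by blast
      define D' where "D' = D1 \<inter> ((-{0}) \<inter> inverse -` csect c' r' \<eta>')"
      have oD': "open D'"
      proof -
        have "open ((-{0}) \<inter> inverse -` csect c' r' \<eta>')"
          by (rule continuous_open_preimage) (auto intro: continuous_intros open_csect)
        then show ?thesis unfolding D'_def D1_def using open_Dc by blast
      qed
      define \<rho> where "\<rho> = min r1' r' / 2"
      have \<rho>: "\<rho> > 0" "\<rho> < r1'" "\<rho> < r'" using r1' h' by (auto simp: \<rho>_def)
      define t0 where "t0 = complex_of_real \<rho> * c'"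
      have t01: "t0 \<in> csect c1 r1' \<eta>1'"
        unfolding t0_def by (rule csect_point) (use \<rho> nc' c'(2) \<eta>1' in \<open>auto simp: dist_norm\<close>)
      have t02: "t0 \<in> csect c' r' \<eta>'"
        unfolding t0_def by (rule csect_point) (use \<rho> nc' h' in auto)
      have t00: "t0 \<noteq> 0" using t01 by (simp add: csect_def)
      have "inverse t0 \<in> D'" using inD1[OF t01] t02 t00 by (simp add: D'_def)
      then have ne: "W \<sigma> ` D' \<noteq> {}" by blast
      have oV: "open (W \<sigma> ` D')" by (rule open_W_image[OF \<sigma> oD'])
      have sub: "W \<sigma> ` D' \<subseteq> W \<sigma> ` D1" unfolding D'_def by blast
      have eqV: "g1 z = g z" if zV: "z \<in> W \<sigma> ` D'" for z
      proof -
        obtain s where s: "s \<in> D'" "z = W \<sigma> s" using zV by blast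
        have "g1 z = f (inverse s)" using g1(2) s by (simp add: D'_def)
        also have "\<dots> = g (W \<sigma> (inverse (inverse s)))" using h'(3) s(1) by (simp add: D'_def)
        also have "\<dots> = g z" using s by simp
        finally show ?thesis .
      qed
      have all: "g1 z = g z" if "z \<in> W \<sigma> ` D1" for z
      proof (rule analytic_continuation_open[OF oV _ ne _ sub g1(1)])
        show "open (W \<sigma> ` D1)" unfolding D1_def by (rule open_W_image[OF \<sigma> open_Dc])
        show "connected (W \<sigma> ` D1)" unfolding D1_def by (rule connected_W_image[OF convex_Dc])
        show "g holomorphic_on W \<sigma> ` D1" using G0 E1G0 by (rule holomorphic_on_subset)
      qed (use eqV that in auto)
      have "\<forall>t\<in>csect c1 r1' \<eta>1'. f t = g (W \<sigma> (inverse t))"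
      proof
        fix t assume t: "t \<in> csect c1 r1' \<eta>1'"
        have "f t = f (inverse (inverse t))" by simp
        also have "\<dots> = g1 (W \<sigma> (inverse t))" using g1(2) inD1[OF t] by blast
        also have "\<dots> = g (W \<sigma> (inverse t))" using all inD1[OF t] by blast
        finally show "f t = g (W \<sigma> (inverse t))" .
      qed
      then show "c1 \<in> Gd" unfolding Gd_def using c1 r1' \<eta>1' by blast
    qed
    then show ?thesis using \<eta>1' by (intro exI[of _ "\<eta>1'/2"]) auto
  qed
  have G1: "openin (top_of_set U) Gd"
    unfolding openin_euclidean_subtopology_iff using O by (auto simp: Gd_def)
  have G2: "openin (top_of_set U) (U - Gd)"
    unfolding openin_euclidean_subtopology_iff
  proof (intro conjI ballI)
    show "U - Gd \<subseteq> U" by blast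
    fix c1 assume c1: "c1 \<in> U - Gd"
    obtain e where "e > 0" "\<forall>c'\<in>U. dist c' c1 < e \<longrightarrow> c' \<in> Gd \<longrightarrow> c1 \<in> Gd" using K c1 by blast
    then show "\<exists>e>0. \<forall>x'\<in>U. dist x' c1 < e \<longrightarrow> x' \<in> U - Gd" using c1 by blast
  qed
  have "c0 \<in> Gd" unfolding Gd_def using start by blast
  then have "U - Gd = {}" using U(2) G1 G2 unfolding connected_openin by blast
  then have "\<forall>c\<in>U. c \<in> Gd" by blast
  then show ?thesis unfolding loc_def Gd_def by blast
qed



lemma ra_lim: "b > 0 \<Longrightarrow> N \<ge> 0 \<Longrightarrow> ((\<lambda>x::real. x * (ln (1/x) * b + 1/2) powr N) \<longlongrightarrow> 0) (at_right 0)"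
  by real_asymp

lemma norm_at0: "filterlim (\<lambda>z::complex. norm z) (at_right 0) (at 0)"
  unfolding filterlim_at
proof
  show "\<forall>\<^sub>F x in at (0::complex). norm x \<in> {0<..} \<and> norm x \<noteq> 0"
    by (auto simp: eventually_at_filter)
  show "((\<lambda>z::complex. norm z) \<longlongrightarrow> 0) (at 0)"
    using tendsto_norm_zero[OF tendsto_ident_at[of "0::complex" UNIV]] by simp
qed

lemma modrem:
  assumes \<sigma>: "\<sigma> \<in> {1,-1}" and c: "norm c = 1" and sc: "\<sigma> * Im c < 0" and \<delta>0: "\<delta>0 > 0"
    and g: "g holomorphic_on (ball 0 \<delta>0 - {0})" and r: "r > 0" and \<eta>: "\<eta> > 0" and C: "C \<ge> 0" and N: "N \<ge> 0"
    and bd: "\<forall>t\<in>csect c r \<eta>. norm (g (W \<sigma> (inverse t))) \<le> C * norm t powr (- N)"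
  shows "\<exists>h. h holomorphic_on ball 0 \<delta>0 \<and> (\<forall>z\<in>ball 0 \<delta>0 - {0}. h z = g z)"
proof -
  define b where "b = \<bar>Im c\<bar>"
  have b: "b > 0" using sc by (auto simp: b_def)
  have R: "1/r > 0" "\<eta>/2 > 0" using r \<eta> by auto
  obtain \<delta> where \<delta>: "\<delta> > 0" "\<forall>z. 0 < norm z \<and> norm z < \<delta> \<longrightarrow>
           (\<exists>s\<in>Dc c (1/r) (\<eta>/2). W \<sigma> s = z \<and> norm s \<le> ln (1 / norm z) / (2 * pi * b) + 1/2)"
    using cov_A[OF \<sigma> c sc R] unfolding b_def by blast
  define \<phi> where "\<phi> x = C * (x * (ln (1/x) * (1 / (2 * pi * b)) + 1/2) powr N)" for x
  have bnd: "norm ((z - 0) * g z) \<le> \<phi> (norm z)" if z: "0 < norm z" "norm z < \<delta>" for z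
  proof -
    obtain s where s: "s \<in> Dc c (1/r) (\<eta>/2)" "W \<sigma> s = z" "norm s \<le> ln (1 / norm z) / (2 * pi * b) + 1/2"
      using \<delta>(2) z by blast
    have s0: "s \<noteq> 0" and ts: "inverse s \<in> csect c r \<eta>" using Dc_sub_csect[OF c r \<eta> s(1)] by auto
    have "norm (g z) = norm (g (W \<sigma> (inverse (inverse s))))" using s(2) by simp
    also have "\<dots> \<le> C * norm (inverse s) powr (- N)" using bd ts by blast
    also have "norm (inverse s) powr (- N) = norm s powr N"
      by (simp add: norm_inverse inverse_powr powr_minus)
    also have "C * norm s powr N \<le> C * (ln (1 / norm z) / (2 * pi * b) + 1/2) powr N"
      using s(3) s0 N C by (intro mult_left_mono powr_mono2) auto
    finally have "norm (g z) \<le> C * (ln (1 / norm z) / (2 * pi * b) + 1/2) powr N" .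
    then have "norm z * norm (g z) \<le> norm z * (C * (ln (1 / norm z) / (2 * pi * b) + 1/2) powr N)"
      using z by (intro mult_left_mono) auto
    then show ?thesis by (simp add: \<phi>_def norm_mult mult.assoc mult.left_commute)
  qed
  have l1: "(\<phi> \<longlongrightarrow> 0) (at_right 0)"
    unfolding \<phi>_def using tendsto_mult_right_zero[OF ra_lim[of "1 / (2 * pi * b)" N], of C] b N by simp
  have l2: "((\<lambda>z::complex. \<phi> (norm z)) \<longlongrightarrow> 0) (at 0)"
    using filterlim_compose[OF l1 norm_at0] by (simp add: o_def)
  have ev: "eventually (\<lambda>z. norm ((z - 0) * g z) \<le> \<phi> (norm z)) (at (0::complex))"
    unfolding eventually_at using \<delta>(1) bnd by (intro exI[of _ \<delta>]) (auto simp: dist_norm)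
  have "((\<lambda>z. (z - 0) * g z) \<longlongrightarrow> 0) (at 0)" by (rule Lim_null_comparison[OF ev l2])
  moreover have "(0::complex) \<in> interior (ball 0 \<delta>0)" using \<delta>0 by simp
  ultimately show ?thesis using holomorphic_on_extend_lim[OF g] by blast
qed



lemma w_phi:
  assumes \<sigma>: "\<sigma> \<in> {1,-1}" and t: "t \<noteq> 0" "1 + t \<noteq> 0"
  shows "W \<sigma> (inverse (t / (1 + t))) = W \<sigma> (inverse t)"
proof -
  have "inverse (t / (1 + t)) = inverse t + 1" using t by (simp add: field_simps)
  then show ?thesis using W_shift1[OF \<sigma>] by simp
qed

lemma w_diff:
  assumes g: "g holomorphic_on G" "open G" and t: "t \<noteq> 0" "W \<sigma> (inverse t) \<in> G"
  shows "(\<lambda>t. g (W \<sigma> (inverse t))) field_differentiable (at t)"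
proof -
  have "(g \<circ> (W \<sigma> \<circ> inverse)) field_differentiable (at t)"
  proof (rule field_differentiable_compose)
    show "(W \<sigma> \<circ> inverse) field_differentiable at t"
    proof (rule field_differentiable_compose)
      show "inverse field_differentiable at t" using t(1)
        by (simp add: field_differentiable_def) (metis DERIV_inverse)
      show "W \<sigma> field_differentiable at (inverse t)"
        using holomorphic_W[of \<sigma> UNIV] holomorphic_on_imp_differentiable_at by blast
    qed
    show "g field_differentiable at ((W \<sigma> \<circ> inverse) t)"
      using g t(2) holomorphic_on_imp_differentiable_at by (simp add: o_def)
  qed
  then show ?thesis by (simp add: o_def)
qed

lemma loc_small:
  assumes \<sigma>: "\<sigma> \<in> {1,-1}" and U: "U \<subseteq> sphere 0 1" and sg: "\<forall>c\<in>U. \<sigma> * Im c < 0" and \<delta>: "\<delta> > 0"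
  shows "loc U (\<lambda>t. W \<sigma> (inverse t) \<in> ball 0 \<delta> - {0} \<and> 1 + t \<noteq> 0)"
  unfolding loc_def
proof
  fix c assume c: "c \<in> U"
  have nc: "norm c = 1" using U c by auto
  have sc: "\<sigma> * Im c < 0" using sg c by blast
  obtain r where r: "r > 0" "\<forall>t\<in>csect c r (\<bar>Im c\<bar>/2). norm (W \<sigma> (inverse t)) < \<delta>"
    using est_small[OF \<sigma> nc sc \<delta>] by blast
  have "\<forall>t\<in>csect c (min r (1/2)) (\<bar>Im c\<bar>/2). W \<sigma> (inverse t) \<in> ball 0 \<delta> - {0} \<and> 1 + t \<noteq> 0"
  proof
    fix t assume t: "t \<in> csect c (min r (1/2)) (\<bar>Im c\<bar>/2)"
    then have "t \<in> csect c r (\<bar>Im c\<bar>/2)" using csect_mono[of "min r (1/2)" r "\<bar>Im c\<bar>/2" "\<bar>Im c\<bar>/2" c] by auto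
    then have "norm (W \<sigma> (inverse t)) < \<delta>" using r by blast
    moreover have "1 + t \<noteq> 0"
    proof
      assume "1 + t = 0"
      then have "t = -1" by (simp add: add_eq_0_iff)
      then show False using t by (simp add: csect_def)
    qed
    ultimately show "W \<sigma> (inverse t) \<in> ball 0 \<delta> - {0} \<and> 1 + t \<noteq> 0" by simp
  qed
  moreover have "\<bar>Im c\<bar>/2 > 0" using sc by auto
  moreover have "min r (1/2) > 0" using r(1) by simp
  ultimately show "\<exists>r>0. \<exists>\<eta>>0. \<forall>t\<in>csect c r \<eta>. W \<sigma> (inverse t) \<in> ball 0 \<delta> - {0} \<and> 1 + t \<noteq> 0"
    by blast
qed

lemma embedA:
  assumes \<sigma>: "\<sigma> \<in> {1,-1}" and U: "U \<subseteq> sphere 0 1" and sg: "\<forall>c\<in>U. \<sigma> * Im c < 0"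
    and \<rho>: "\<rho> > 0" and g: "g holomorphic_on (ball 0 \<rho> - {0})"
  shows "per_section U (\<lambda>t. g (W \<sigma> (inverse t)))"
proof -
  have "loc U (\<lambda>t. (\<lambda>t. g (W \<sigma> (inverse t))) field_differentiable (at t) \<and>
          g (W \<sigma> (inverse (t / (1 + t)))) = g (W \<sigma> (inverse t)))"
  proof (rule loc_mono[OF loc_small[OF \<sigma> U sg \<rho>]])
    fix t assume t: "t \<noteq> 0" "W \<sigma> (inverse t) \<in> ball 0 \<rho> - {0} \<and> 1 + t \<noteq> 0"
    have "(\<lambda>t. g (W \<sigma> (inverse t))) field_differentiable (at t)"
      by (rule w_diff[OF g]) (use t in auto)
    moreover have "g (W \<sigma> (inverse (t / (1 + t)))) = g (W \<sigma> (inverse t))" using w_phi[OF \<sigma>] t by simp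
    ultimately show "(\<lambda>t. g (W \<sigma> (inverse t))) field_differentiable (at t) \<and>
          g (W \<sigma> (inverse (t / (1 + t)))) = g (W \<sigma> (inverse t))" by blast
  qed
  then show ?thesis using per_iff[OF U] by blast
qed

lemma injA:
  assumes \<sigma>: "\<sigma> \<in> {1,-1}" and U: "U \<subseteq> sphere 0 1" "U \<noteq> {}" and sg: "\<forall>c\<in>U. \<sigma> * Im c < 0"
    and e: "loc U (\<lambda>t. g1 (W \<sigma> (inverse t)) = g2 (W \<sigma> (inverse t)))"
  shows "\<exists>\<rho>>0. \<forall>z \<in> ball 0 \<rho> - {0}. g1 z = g2 z"
proof -
  obtain c0 where c0: "c0 \<in> U" using U by blast
  have nc: "norm c0 = 1" using U c0 by auto
  have sc: "\<sigma> * Im c0 < 0" using sg c0 by blast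
  obtain r \<eta> where h: "r > 0" "\<eta> > 0" "\<forall>t\<in>csect c0 r \<eta>. g1 (W \<sigma> (inverse t)) = g2 (W \<sigma> (inverse t))"
    using loc_D[OF e c0] by blast
  have R: "1/r > 0" "\<eta>/2 > 0" using h by auto
  obtain \<delta> where \<delta>: "\<delta> > 0" "\<forall>z. 0 < norm z \<and> norm z < \<delta> \<longrightarrow>
           (\<exists>s\<in>Dc c0 (1/r) (\<eta>/2). W \<sigma> s = z \<and> norm s \<le> ln (1 / norm z) / (2 * pi * \<bar>Im c0\<bar>) + 1/2)"
    using cov_A[OF \<sigma> nc sc R] by blast
  have "g1 z = g2 z" if z: "z \<in> ball 0 \<delta> - {0}" for z :: complex
  proof -
    obtain s where s: "s \<in> Dc c0 (1/r) (\<eta>/2)" "W \<sigma> s = z" using \<delta>(2) z by auto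
    have "inverse s \<in> csect c0 r \<eta>" using Dc_sub_csect[OF nc h(1,2) s(1)] by blast
    then have "g1 (W \<sigma> (inverse (inverse s))) = g2 (W \<sigma> (inverse (inverse s)))" using h(3) by blast
    then show ?thesis using s(2) by simp
  qed
  then show ?thesis using \<delta>(1) by blast
qed

lemma surjA:
  assumes \<sigma>: "\<sigma> \<in> {1,-1}" and U: "U \<subseteq> sphere 0 1" "connected U" "U \<noteq> {}" and sg: "\<forall>c\<in>U. \<sigma> * Im c < 0"
    and f: "per_section U f"
  shows "\<exists>\<rho>>0. \<exists>g. g holomorphic_on (ball 0 \<rho> - {0}) \<and> loc U (\<lambda>t. f t = g (W \<sigma> (inverse t)))"
proof -
  have Pf: "loc U (\<lambda>t. f field_differentiable (at t) \<and> f (t / (1 + t)) = f t)" using f per_iff[OF U(1)] by blast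
  obtain c0 where c0: "c0 \<in> U" using U by blast
  have nc: "norm c0 = 1" using U c0 by auto
  have sc: "\<sigma> * Im c0 < 0" using sg c0 by blast
  obtain r0 \<eta>0 where h: "r0 > 0" "\<eta>0 > 0" "\<forall>t\<in>csect c0 r0 \<eta>0. f field_differentiable (at t) \<and> f (t / (1 + t)) = f t"
    using loc_D[OF Pf c0] by blast
  define D0 where "D0 = Dc c0 (1/r0) (\<eta>0/2)"
  obtain g0 where g0: "g0 holomorphic_on (W \<sigma> ` D0)" "\<forall>s\<in>D0. f (inverse s) = g0 (W \<sigma> s)"
    using local_descent[OF \<sigma> nc h] unfolding D0_def by blast
  have R: "1/r0 > 0" "\<eta>0/2 > 0" using h by auto
  obtain \<delta> where \<delta>: "\<delta> > 0" "\<forall>z. 0 < norm z \<and> norm z < \<delta> \<longrightarrow>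
           (\<exists>s\<in>Dc c0 (1/r0) (\<eta>0/2). W \<sigma> s = z \<and> norm s \<le> ln (1 / norm z) / (2 * pi * \<bar>Im c0\<bar>) + 1/2)"
    using cov_A[OF \<sigma> nc sc R] by blast
  have sub: "ball 0 \<delta> - {0} \<subseteq> W \<sigma> ` D0"
  proof
    fix z :: complex assume z: "z \<in> ball 0 \<delta> - {0}"
    then obtain s where "s \<in> D0" "W \<sigma> s = z" using \<delta>(2) unfolding D0_def by auto
    then show "z \<in> W \<sigma> ` D0" by blast
  qed
  have gh: "g0 holomorphic_on (ball 0 \<delta> - {0})" using g0(1) sub by (rule holomorphic_on_subset)
  define r0' where "r0' = 1 / (2 * (1/r0))"
  define \<eta>0' where "\<eta>0' = min (1/2) ((\<eta>0/2)/2)"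
  have r0': "r0' > 0" "\<eta>0' > 0" using h by (auto simp: r0'_def \<eta>0'_def)
  have st: "\<forall>t\<in>csect c0 r0' \<eta>0'. f t = g0 (W \<sigma> (inverse t))"
  proof
    fix t assume t: "t \<in> csect c0 r0' \<eta>0'"
    have "inverse t \<in> D0" using csect_sub_Dc[OF nc R, of t] t by (simp add: D0_def r0'_def \<eta>0'_def)
    then have "f (inverse (inverse t)) = g0 (W \<sigma> (inverse t))" using g0(2) by blast
    then show "f t = g0 (W \<sigma> (inverse t))" by simp
  qed
  have inG0: "loc U (\<lambda>t. W \<sigma> (inverse t) \<in> ball 0 \<delta> - {0})"
    by (rule loc_mono[OF loc_small[OF \<sigma> U(1) sg \<delta>(1)]]) blast
  have "loc U (\<lambda>t. f t = g0 (W \<sigma> (inverse t)))"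
    by (rule conn[OF U(1,2) \<sigma> Pf gh inG0 c0 r0' st])
  then show ?thesis using gh \<delta>(1) by blast
qed



lemma bounded_near:
  assumes h: "h holomorphic_on ball 0 \<rho>" and \<rho>: "\<rho> > 0"
  shows "\<exists>B>0. \<forall>z. norm z \<le> \<rho>/2 \<longrightarrow> norm (h z) \<le> B"
proof -
  have sub: "cball 0 (\<rho>/2) \<subseteq> ball (0::complex) \<rho>" using \<rho> by (auto simp: subset_eq)
  have "continuous_on (cball 0 (\<rho>/2)) h"
    using holomorphic_on_imp_continuous_on[OF holomorphic_on_subset[OF h sub]] .
  then have "compact (h ` cball 0 (\<rho>/2))" by (rule compact_continuous_image) simp
  then have "bounded (h ` cball 0 (\<rho>/2))" by (rule compact_imp_bounded)
  then obtain B where "B > 0" "\<forall>x\<in>h ` cball 0 (\<rho>/2). norm x \<le> B" unfolding bounded_pos by blast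
  then show ?thesis by auto
qed

lemma lin_bound:
  assumes h: "h holomorphic_on ball 0 \<rho>" and \<rho>: "\<rho> > 0" and h0: "h 0 = 0"
  shows "\<exists>M>0. \<forall>z. norm z < \<rho>/2 \<longrightarrow> norm (h z) \<le> M * norm z"
proof -
  define k where "k z = (if z = 0 then deriv h 0 else (h z - h 0) / (z - 0))" for z
  have "k holomorphic_on ball 0 \<rho>" unfolding k_def by (rule pole_lemma[OF h]) (use \<rho> in auto)
  then obtain B where B: "B > 0" "\<forall>z. norm z \<le> \<rho>/2 \<longrightarrow> norm (k z) \<le> B" using bounded_near \<rho> by blast
  have "norm (h z) \<le> B * norm z" if z: "norm z < \<rho>/2" for z
  proof (cases "z = 0")
    case True then show ?thesis using h0 by simp
  next
    case False
    then have "h z = z * k z" using h0 by (simp add: k_def)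
    then have "norm (h z) = norm z * norm (k z)" by (simp add: norm_mult)
    also have "\<dots> \<le> norm z * B" using B z by (intro mult_left_mono) auto
    finally show ?thesis by (simp add: mult.commute)
  qed
  then show ?thesis using B(1) by blast
qed

lemma modA_fwd:
  assumes \<sigma>: "\<sigma> \<in> {1,-1}" and U: "U \<subseteq> sphere 0 1" "connected U" "U \<noteq> {}" and sg: "\<forall>c\<in>U. \<sigma> * Im c < 0"
    and f: "per_section U f" "moderate_section U f"
  shows "\<exists>\<rho>>0. \<exists>h. h holomorphic_on ball 0 \<rho> \<and> loc U (\<lambda>t. f t = h (W \<sigma> (inverse t)))"
proof -
  obtain \<delta> g where g: "\<delta> > 0" "g holomorphic_on (ball 0 \<delta> - {0})" and L: "loc U (\<lambda>t. f t = g (W \<sigma> (inverse t)))"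
    using surjA[OF \<sigma> U sg f(1)] by blast
  have mb: "modb U f" using f(2) moderate_iff[OF U(1)] by blast
  obtain c0 where c0: "c0 \<in> U" using U by blast
  have nc: "norm c0 = 1" using U c0 by auto
  have sc: "\<sigma> * Im c0 < 0" using sg c0 by blast
  have "\<exists>r>0. \<exists>\<eta>>0. \<exists>C N. \<forall>t\<in>csect c0 r \<eta>. norm (f t) \<le> C * norm t powr (- N)"
    using mb c0 unfolding modb_def by blast
  then obtain r \<eta> C N where b: "r > 0" "\<eta> > 0" "\<forall>t\<in>csect c0 r \<eta>. norm (f t) \<le> C * norm t powr (- N)"
    by blast
  obtain r1 \<eta>1 where b1: "r1 > 0" "\<eta>1 > 0" "r1 \<le> min r 1" "\<eta>1 \<le> \<eta>" "\<forall>t\<in>csect c0 r1 \<eta>1. f t = g (W \<sigma> (inverse t))"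
    using loc_shrink[OF L c0, of "min r 1" \<eta>] b by auto
  define C' where "C' = max C 0"
  define N' where "N' = max N 0"
  have bd: "\<forall>t\<in>csect c0 r1 \<eta>1. norm (g (W \<sigma> (inverse t))) \<le> C' * norm t powr (- N')"
  proof
    fix t assume t: "t \<in> csect c0 r1 \<eta>1"
    have tt: "t \<in> csect c0 r \<eta>" using t csect_mono[of r1 r \<eta>1 \<eta> c0] b1 by auto
    have nt: "norm t > 0" "norm t \<le> 1" using t b1 by (auto simp: csect_def)
    have "norm (g (W \<sigma> (inverse t))) = norm (f t)" using b1(5) t by simp
    also have "\<dots> \<le> C * norm t powr (- N)" using b(3) tt by blast
    also have "\<dots> \<le> C' * norm t powr (- N)" unfolding C'_def by (intro mult_right_mono) auto
    also have "norm t powr (- N) \<le> norm t powr (- N')"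
      using nt by (intro powr_mono') (auto simp: N'_def)
    then have "C' * norm t powr (- N) \<le> C' * norm t powr (- N')" by (intro mult_left_mono) (auto simp: C'_def)
    finally show "norm (g (W \<sigma> (inverse t))) \<le> C' * norm t powr (- N')" .
  qed
  obtain h where h: "h holomorphic_on ball 0 \<delta>" "\<forall>z\<in>ball 0 \<delta> - {0}. h z = g z"
    using modrem[OF \<sigma> nc sc g(1,2) b1(1,2) _ _ bd] by (auto simp: C'_def N'_def)
  have "loc U (\<lambda>t. f t = h (W \<sigma> (inverse t)))"
  proof (rule loc_mono[OF loc_conj[OF L loc_small[OF \<sigma> U(1) sg g(1)]]])
    fix t assume "f t = g (W \<sigma> (inverse t)) \<and> W \<sigma> (inverse t) \<in> ball 0 \<delta> - {0} \<and> 1 + t \<noteq> 0"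
    then show "f t = h (W \<sigma> (inverse t))" using h(2) by auto
  qed
  then show ?thesis using h(1) g(1) by blast
qed

lemma modA_bwd:
  assumes \<sigma>: "\<sigma> \<in> {1,-1}" and U: "U \<subseteq> sphere 0 1" and sg: "\<forall>c\<in>U. \<sigma> * Im c < 0"
    and \<rho>: "\<rho> > 0" and h: "h holomorphic_on ball 0 \<rho>" and E: "loc U (\<lambda>t. f t = h (W \<sigma> (inverse t)))"
  shows "per_section U f \<and> moderate_section U f"
proof -
  have "h holomorphic_on (ball 0 \<rho> - {0})" using h by (rule holomorphic_on_subset) blast
  then have p: "per_section U (\<lambda>t. h (W \<sigma> (inverse t)))" by (rule embedA[OF \<sigma> U sg \<rho>])
  have E': "loc U (\<lambda>t. h (W \<sigma> (inverse t)) = f t)" by (rule loc_mono[OF E]) simp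
  have pf: "per_section U f" by (rule per_transfer[OF U p E'])
  have "modb U (\<lambda>t. h (W \<sigma> (inverse t)))"
    unfolding modb_def
  proof
    fix c assume c: "c \<in> U"
    have nc: "norm c = 1" using U c by auto
    have sc: "\<sigma> * Im c < 0" using sg c by blast
    obtain B where B: "B > 0" "\<forall>z. norm z \<le> \<rho>/2 \<longrightarrow> norm (h z) \<le> B" using bounded_near[OF h \<rho>] by blast
    have "\<rho>/2 > 0" using \<rho> by simp
    obtain r where r: "r > 0" "\<forall>t\<in>csect c r (\<bar>Im c\<bar>/2). norm (W \<sigma> (inverse t)) < \<rho>/2"
      using est_small[OF \<sigma> nc sc \<open>\<rho>/2 > 0\<close>] by blast
    have "\<forall>t\<in>csect c r (\<bar>Im c\<bar>/2). norm (h (W \<sigma> (inverse t))) \<le> B * norm t powr (- 0)"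
    proof
      fix t assume t: "t \<in> csect c r (\<bar>Im c\<bar>/2)"
      have "norm (h (W \<sigma> (inverse t))) \<le> B" using B r t by auto
      then show "norm (h (W \<sigma> (inverse t))) \<le> B * norm t powr (- 0)" using t by (simp add: csect_def)
    qed
    moreover have "\<bar>Im c\<bar>/2 > 0" using sc by auto
    ultimately show "\<exists>r>0. \<exists>\<eta>>0. \<exists>C N. \<forall>t\<in>csect c r \<eta>. norm (h (W \<sigma> (inverse t))) \<le> C * norm t powr (- N)"
      using r(1) by blast
  qed
  then have "modb U f" using modb_transfer E' by blast
  moreover have "holo_section U f" using pf by (simp add: per_section_def)
  ultimately show ?thesis using pf moderate_iff[OF U] by blast
qed

lemma rapA_bwd:
  assumes \<sigma>: "\<sigma> \<in> {1,-1}" and U: "U \<subseteq> sphere 0 1" and sg: "\<forall>c\<in>U. \<sigma> * Im c < 0"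
    and \<rho>: "\<rho> > 0" and h: "h holomorphic_on ball 0 \<rho>" and h0: "h 0 = 0" and E: "loc U (\<lambda>t. f t = h (W \<sigma> (inverse t)))"
  shows "per_section U f \<and> rapid_section U f"
proof -
  have pm: "per_section U f \<and> moderate_section U f" by (rule modA_bwd[OF \<sigma> U sg \<rho> h E])
  have E': "loc U (\<lambda>t. h (W \<sigma> (inverse t)) = f t)" by (rule loc_mono[OF E]) simp
  obtain M where M: "M > 0" "\<forall>z. norm z < \<rho>/2 \<longrightarrow> norm (h z) \<le> M * norm z" using lin_bound[OF h \<rho> h0] by blast
  have "rapb U (\<lambda>t. h (W \<sigma> (inverse t)))"
    unfolding rapb_def
  proof
    fix c assume c: "c \<in> U"
    have nc: "norm c = 1" using U c by auto
    have sc: "\<sigma> * Im c < 0" using sg c by blast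
    have "\<rho>/2 > 0" using \<rho> by simp
    obtain r where r: "r > 0" "\<forall>t\<in>csect c r (\<bar>Im c\<bar>/2). norm (W \<sigma> (inverse t)) < \<rho>/2"
      using est_small[OF \<sigma> nc sc \<open>\<rho>/2 > 0\<close>] by blast
    have "\<exists>C. \<forall>t\<in>csect c r (\<bar>Im c\<bar>/2). norm (h (W \<sigma> (inverse t))) \<le> C * norm t ^ N" for N :: nat
    proof -
      have "\<forall>t\<in>csect c r (\<bar>Im c\<bar>/2). norm (h (W \<sigma> (inverse t))) \<le> (M * (real N / (pi * \<bar>Im c\<bar>)) ^ N) * norm t ^ N"
      proof
        fix t assume t: "t \<in> csect c r (\<bar>Im c\<bar>/2)"
        have "norm (h (W \<sigma> (inverse t))) \<le> M * norm (W \<sigma> (inverse t))" using M r t by blast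
        also have "\<dots> \<le> M * ((real N / (pi * \<bar>Im c\<bar>)) ^ N * norm t ^ N)"
          using rapid_W_bound[OF \<sigma> nc sc t, of N] M by (intro mult_left_mono) auto
        finally show "norm (h (W \<sigma> (inverse t))) \<le> (M * (real N / (pi * \<bar>Im c\<bar>)) ^ N) * norm t ^ N"
          by (simp add: mult.assoc)
      qed
      then show ?thesis by blast
    qed
    moreover have "\<bar>Im c\<bar>/2 > 0" using sc by auto
    ultimately show "\<exists>r>0. \<exists>\<eta>>0. \<forall>N::nat. \<exists>C. \<forall>t\<in>csect c r \<eta>. norm (h (W \<sigma> (inverse t))) \<le> C * norm t ^ N"
      using r(1) by blast
  qed
  then have "rapb U f" using rapb_transfer E' by blast
  moreover have "holo_section U f" using pm by (simp add: per_section_def)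
  ultimately show ?thesis using pm rapid_iff[OF U] by blast
qed

lemma rapA_fwd:
  assumes \<sigma>: "\<sigma> \<in> {1,-1}" and U: "U \<subseteq> sphere 0 1" "connected U" "U \<noteq> {}" and sg: "\<forall>c\<in>U. \<sigma> * Im c < 0"
    and f: "per_section U f" "rapid_section U f"
  shows "\<exists>\<rho>>0. \<exists>h. h holomorphic_on ball 0 \<rho> \<and> h 0 = 0 \<and> loc U (\<lambda>t. f t = h (W \<sigma> (inverse t)))"
proof -
  have rb: "rapb U f" using f(2) rapid_iff[OF U(1)] by blast
  have "moderate_section U f" using rapb_modb[OF rb] f(1) moderate_iff[OF U(1)] by (simp add: per_section_def)
  then obtain \<rho> h where h: "\<rho> > 0" "h holomorphic_on ball 0 \<rho>" and E: "loc U (\<lambda>t. f t = h (W \<sigma> (inverse t)))"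
    using modA_fwd[OF \<sigma> U sg f(1)] by blast
  obtain c0 where c0: "c0 \<in> U" using U by blast
  have nc: "norm c0 = 1" using U c0 by auto
  have sc: "\<sigma> * Im c0 < 0" using sg c0 by blast
  have "\<exists>r>0. \<exists>\<eta>>0. \<forall>N::nat. \<exists>C. \<forall>t\<in>csect c0 r \<eta>. norm (f t) \<le> C * norm t ^ N"
    using rb c0 unfolding rapb_def by blast
  then obtain r \<eta> where b: "r > 0" "\<eta> > 0" "\<forall>N::nat. \<exists>C. \<forall>t\<in>csect c0 r \<eta>. norm (f t) \<le> C * norm t ^ N"
    by blast
  obtain C1 where C1: "\<forall>t\<in>csect c0 r \<eta>. norm (f t) \<le> C1 * norm t ^ 1" using b(3) by blast
  obtain r3 \<eta>3 where b3: "r3 > 0" "\<eta>3 > 0" "r3 \<le> r" "\<eta>3 \<le> \<eta>" "\<forall>t\<in>csect c0 r3 \<eta>3. f t = h (W \<sigma> (inverse t))"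
    using loc_shrink[OF E c0 b(1,2)] by blast
  have "h 0 = 0"
  proof (rule ccontr)
    assume h0: "h 0 \<noteq> 0"
    define a where "a = norm (h 0)"
    have a: "a > 0" using h0 by (simp add: a_def)
    have "continuous (at 0) h"
      using holomorphic_on_imp_continuous_on[OF h(2)] h(1) by (simp add: continuous_on_interior)
    then obtain d where d: "d > 0" "\<forall>z. dist z 0 < d \<longrightarrow> dist (h z) (h 0) < a/2"
      using a unfolding continuous_at_eps_delta by (metis half_gt_zero)
    obtain r4 where r4: "r4 > 0" "\<forall>t\<in>csect c0 r4 (\<bar>Im c0\<bar>/2). norm (W \<sigma> (inverse t)) < d"
      using est_small[OF \<sigma> nc sc d(1)] by blast
    define X where "X = a / (2 * (\<bar>C1\<bar> + 1))"
    have X: "X > 0" using a by (simp add: X_def)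
    define m where "m = min (min r3 r4) X"
    have m: "m > 0" "m \<le> r3" "m \<le> r4" "m \<le> X" using X b3 r4 by (auto simp: m_def)
    define \<tau> where "\<tau> = m / 2"
    have \<tau>: "\<tau> > 0" "\<tau> < r3" "\<tau> < r4" "\<tau> < X"
      using m by (auto simp: \<tau>_def)
    define t where "t = complex_of_real \<tau> * c0"
    have t3: "t \<in> csect c0 r3 \<eta>3" unfolding t_def by (rule csect_point) (use \<tau> nc b3 in auto)
    have t4: "t \<in> csect c0 r4 (\<bar>Im c0\<bar>/2)" unfolding t_def by (rule csect_point) (use \<tau> nc sc in auto)
    have tt: "t \<in> csect c0 r \<eta>" using t3 csect_mono[of r3 r \<eta>3 \<eta> c0] b3 by auto
    have nt: "norm t = \<tau>" using \<tau> nc by (simp add: t_def norm_mult)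
    have "dist (h (W \<sigma> (inverse t))) (h 0) < a/2" using d r4 t4 by (simp add: dist_norm)
    then have "norm (h (W \<sigma> (inverse t))) > a/2" unfolding a_def dist_norm
      using norm_triangle_ineq2[of "h 0" "h (W \<sigma> (inverse t))"] by (simp add: norm_minus_commute)
    moreover have "norm (f t) \<le> C1 * \<tau>" using C1 tt nt by force
    moreover have "C1 * \<tau> < a/2"
    proof -
      have "C1 * \<tau> \<le> (\<bar>C1\<bar> + 1) * \<tau>" using \<tau> by (intro mult_right_mono) auto
      also have "\<dots> < (\<bar>C1\<bar> + 1) * X" using \<tau> by (intro mult_strict_left_mono) auto
      also have "\<dots> = a/2" unfolding X_def by (simp add: field_simps)
      finally show ?thesis .
    qed
    moreover have "f t = h (W \<sigma> (inverse t))" using b3(5) t3 by blast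
    ultimately have "norm (f t) > a/2" "norm (f t) < a/2" by simp_all
    then show False by linarith
  qed
  then show ?thesis using h E by blast
qed

theorem caseA:
  assumes \<sigma>: "\<sigma> \<in> {1,-1}" and U: "U \<subseteq> sphere 0 1" "connected U" "U \<noteq> {}" and sg: "\<forall>c\<in>U. \<sigma> * Im c < 0"
  shows "punctured_germ_description U (\<lambda>t. W \<sigma> (inverse t))"
  unfolding punctured_germ_description_def
proof (intro conjI allI impI)
  fix \<rho> g assume "\<rho> > 0 \<and> g holomorphic_on (ball 0 \<rho> - {0})"
  then show "per_section U (\<lambda>t. g (W \<sigma> (inverse t)))" using embedA[OF \<sigma> U(1) sg] by blast
next
  fix \<rho>1 \<rho>2 g1 g2
  assume "\<rho>1 > 0 \<and> \<rho>2 > 0 \<and> g1 holomorphic_on (ball 0 \<rho>1 - {0}) \<and> g2 holomorphic_on (ball 0 \<rho>2 - {0})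
        \<and> germ_eq U (\<lambda>t. g1 (W \<sigma> (inverse t))) (\<lambda>t. g2 (W \<sigma> (inverse t)))"
  then have "germ_eq U (\<lambda>t. g1 (W \<sigma> (inverse t))) (\<lambda>t. g2 (W \<sigma> (inverse t)))" by blast
  then have "loc U (\<lambda>t. g1 (W \<sigma> (inverse t)) = g2 (W \<sigma> (inverse t)))" by (simp add: germ_eq_iff[OF U(1)])
  then show "\<exists>\<rho>>0. \<forall>z \<in> ball 0 \<rho> - {0}. g1 z = g2 z" by (rule injA[OF \<sigma> U(1,3) sg])
next
  fix f assume "per_section U f"
  then obtain \<rho> g where "\<rho> > 0" "g holomorphic_on (ball 0 \<rho> - {0})" "loc U (\<lambda>t. f t = g (W \<sigma> (inverse t)))"
    using surjA[OF \<sigma> U sg] by blast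
  moreover have "germ_eq U f (\<lambda>t. g (W \<sigma> (inverse t)))" using calculation(3) by (simp add: germ_eq_iff[OF U(1)])
  ultimately show "\<exists>\<rho>>0. \<exists>g. g holomorphic_on (ball 0 \<rho> - {0}) \<and> germ_eq U f (\<lambda>t. g (W \<sigma> (inverse t)))"
    by blast
next
  fix f
  show "(per_section U f \<and> moderate_section U f) \<longleftrightarrow>
        (\<exists>\<rho>>0. \<exists>h. h holomorphic_on ball 0 \<rho> \<and> germ_eq U f (\<lambda>t. h (W \<sigma> (inverse t))))"
  proof
    assume "per_section U f \<and> moderate_section U f"
    then obtain \<rho> h where "\<rho> > 0" "h holomorphic_on ball 0 \<rho>" "loc U (\<lambda>t. f t = h (W \<sigma> (inverse t)))"
      using modA_fwd[OF \<sigma> U sg] by blast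
    moreover have "germ_eq U f (\<lambda>t. h (W \<sigma> (inverse t)))" using calculation(3) by (simp add: germ_eq_iff[OF U(1)])
    ultimately show "\<exists>\<rho>>0. \<exists>h. h holomorphic_on ball 0 \<rho> \<and> germ_eq U f (\<lambda>t. h (W \<sigma> (inverse t)))"
      by blast
  next
    assume "\<exists>\<rho>>0. \<exists>h. h holomorphic_on ball 0 \<rho> \<and> germ_eq U f (\<lambda>t. h (W \<sigma> (inverse t)))"
    then obtain \<rho> h where "\<rho> > 0" "h holomorphic_on ball 0 \<rho>" "germ_eq U f (\<lambda>t. h (W \<sigma> (inverse t)))"
      by blast
    moreover have "loc U (\<lambda>t. f t = h (W \<sigma> (inverse t)))" using calculation(3) by (simp add: germ_eq_iff[OF U(1)])
    ultimately show "per_section U f \<and> moderate_section U f" using modA_bwd[OF \<sigma> U(1) sg] by blast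
  qed
next
  fix f
  show "(per_section U f \<and> rapid_section U f) \<longleftrightarrow>
        (\<exists>\<rho>>0. \<exists>h. h holomorphic_on ball 0 \<rho> \<and> h 0 = 0 \<and> germ_eq U f (\<lambda>t. h (W \<sigma> (inverse t))))"
  proof
    assume "per_section U f \<and> rapid_section U f"
    then obtain \<rho> h where "\<rho> > 0" "h holomorphic_on ball 0 \<rho>" "h 0 = 0" "loc U (\<lambda>t. f t = h (W \<sigma> (inverse t)))"
      using rapA_fwd[OF \<sigma> U sg] by blast
    moreover have "germ_eq U f (\<lambda>t. h (W \<sigma> (inverse t)))" using calculation(4) by (simp add: germ_eq_iff[OF U(1)])
    ultimately show "\<exists>\<rho>>0. \<exists>h. h holomorphic_on ball 0 \<rho> \<and> h 0 = 0 \<and> germ_eq U f (\<lambda>t. h (W \<sigma> (inverse t)))"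
      by blast
  next
    assume "\<exists>\<rho>>0. \<exists>h. h holomorphic_on ball 0 \<rho> \<and> h 0 = 0 \<and> germ_eq U f (\<lambda>t. h (W \<sigma> (inverse t)))"
    then obtain \<rho> h where "\<rho> > 0" "h holomorphic_on ball 0 \<rho>" "h 0 = 0" "germ_eq U f (\<lambda>t. h (W \<sigma> (inverse t)))"
      by blast
    moreover have "loc U (\<lambda>t. f t = h (W \<sigma> (inverse t)))" using calculation(4) by (simp add: germ_eq_iff[OF U(1)])
    ultimately show "per_section U f \<and> rapid_section U f" using rapA_bwd[OF \<sigma> U(1) sg] by blast
  qed
qed



lemma loc_true: "loc U (\<lambda>t. True)"
  unfolding loc_def by (intro ballI exI[of _ 1] conjI) auto

lemma loc_one: "loc U (\<lambda>t. 1 + t \<noteq> 0)"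
proof -
  have "\<forall>t\<in>csect c (1/2) 1. 1 + t \<noteq> 0" for c
  proof
    fix t assume t: "t \<in> csect c (1/2) 1"
    show "1 + t \<noteq> 0"
    proof
      assume "1 + t = 0"
      then have "t = -1" by (simp add: add_eq_0_iff)
      then show False using t by (simp add: csect_def)
    qed
  qed
  moreover have "(1/2::real) > 0" "(1::real) > 0" by simp_all
  ultimately show ?thesis unfolding loc_def by blast
qed

lemma per_const:
  assumes U: "U \<subseteq> sphere 0 1" shows "per_section U (\<lambda>t. k)"
proof -
  have "loc U (\<lambda>t. (\<lambda>t. k) field_differentiable (at t) \<and> k = k)"
    by (rule loc_mono[OF loc_true]) simp
  then show ?thesis using per_iff[OF U] by simp
qed

lemma ucoord_eq: "ucoord = (\<lambda>t. W 1 (inverse t))"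
  by (rule ext) (simp add: ucoord_def W_def divide_inverse)

lemma vcoord_eq: "vcoord = (\<lambda>t. W (-1) (inverse t))"
  by (rule ext) (simp add: vcoord_def ucoord_def W_def divide_inverse exp_minus)

lemma W_inv: "W 1 s = inverse (W (-1) s)"
  by (simp add: W_def exp_minus)

lemma c12:
  assumes c0: "c0 = 1 \<or> c0 = -1" and \<alpha>: "0 < \<alpha>" "\<alpha> \<le> 1"
  shows "\<exists>c1 c2. norm c1 = 1 \<and> norm c2 = 1 \<and> norm (c1 - c0) \<le> \<alpha> \<and> norm (c2 - c0) \<le> \<alpha> \<and> Im c1 < 0 \<and> Im c2 > 0"
proof -
  have s: "sin \<alpha> > 0" using \<alpha> pi_gt3 by (intro sin_gt_zero) auto
  have d1: "norm (cis \<alpha> - 1) \<le> \<alpha>" using norm_cis_diff[of \<alpha> 0] \<alpha> by simp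
  have d2: "norm (cis (-\<alpha>) - 1) \<le> \<alpha>" using norm_cis_diff[of "-\<alpha>" 0] \<alpha> by simp
  show ?thesis
  proof (cases "c0 = 1")
    case True
    show ?thesis
      by (rule exI[of _ "cis (-\<alpha>)"], rule exI[of _ "cis \<alpha>"]) (use True d1 d2 s in auto)
  next
    case False
    then have c: "c0 = -1" using c0 by blast
    have "- cis \<alpha> - c0 = - (cis \<alpha> - 1)" using c by simp
    then have e1: "norm (- cis \<alpha> - c0) \<le> \<alpha>" using d1 by (simp only: norm_minus_cancel)
    have "- cis (-\<alpha>) - c0 = - (cis (-\<alpha>) - 1)" using c by simp
    then have e2: "norm (- cis (-\<alpha>) - c0) \<le> \<alpha>" using d2 by (simp only: norm_minus_cancel)
    show ?thesis
      by (rule exI[of _ "- cis \<alpha>"], rule exI[of _ "- cis (-\<alpha>)"]) (use e1 e2 s in auto)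
  qed
qed

lemma embedU:
  assumes U: "U \<subseteq> sphere 0 1" and g: "g holomorphic_on (UNIV - {0})"
  shows "per_section U (\<lambda>t. g (W 1 (inverse t)))"
proof -
  have "loc U (\<lambda>t. (\<lambda>t. g (W 1 (inverse t))) field_differentiable (at t) \<and>
          g (W 1 (inverse (t / (1 + t)))) = g (W 1 (inverse t)))"
  proof (rule loc_mono[OF loc_one])
    fix t :: complex assume t: "t \<noteq> 0" "1 + t \<noteq> 0"
    have "(\<lambda>t. g (W 1 (inverse t))) field_differentiable (at t)"
      by (rule w_diff[OF g]) (use t in auto)
    moreover have "g (W 1 (inverse (t / (1 + t)))) = g (W 1 (inverse t))" using w_phi[of 1] t by simp
    ultimately show "(\<lambda>t. g (W 1 (inverse t))) field_differentiable (at t) \<and>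
          g (W 1 (inverse (t / (1 + t)))) = g (W 1 (inverse t))" by blast
  qed
  then show ?thesis using per_iff[OF U] by blast
qed

lemma injU:
  assumes U: "U \<subseteq> sphere 0 1" and c0: "c0 \<in> U" "c0 = 1 \<or> c0 = -1"
    and e: "loc U (\<lambda>t. g1 (W 1 (inverse t)) = g2 (W 1 (inverse t)))"
  shows "\<forall>z. z \<noteq> 0 \<longrightarrow> g1 z = g2 z"
proof (intro allI impI)
  fix z :: complex assume z: "z \<noteq> 0"
  have nc: "norm c0 = 1" using U c0 by auto
  obtain r \<eta> where h: "r > 0" "\<eta> > 0" "\<forall>t\<in>csect c0 r \<eta>. g1 (W 1 (inverse t)) = g2 (W 1 (inverse t))"
    using loc_D[OF e c0(1)] by blast
  have R: "1/r > 0" "\<eta>/2 > 0" using h by auto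
  obtain s where s: "s \<in> Dc c0 (1/r) (\<eta>/2)" "W 1 s = z" using cov_iii[OF c0(2) R z] by blast
  have "inverse s \<in> csect c0 r \<eta>" using Dc_sub_csect[OF nc h(1,2) s(1)] by blast
  then have "g1 (W 1 (inverse (inverse s))) = g2 (W 1 (inverse (inverse s)))" using h(3) by blast
  then show "g1 z = g2 z" using s(2) by simp
qed

lemma surjU:
  assumes U: "U \<subseteq> sphere 0 1" "connected U" and c0: "c0 \<in> U" "c0 = 1 \<or> c0 = -1"
    and f: "per_section U f"
  shows "\<exists>g. g holomorphic_on (UNIV - {0}) \<and> loc U (\<lambda>t. f t = g (W 1 (inverse t)))"
proof -
  have \<sigma>: "(1::real) \<in> {1,-1}" by simp
  have Pf: "loc U (\<lambda>t. f field_differentiable (at t) \<and> f (t / (1 + t)) = f t)" using f per_iff[OF U(1)] by blast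
  have nc: "norm c0 = 1" using U c0 by auto
  obtain r0 \<eta>0 where h: "r0 > 0" "\<eta>0 > 0" "\<forall>t\<in>csect c0 r0 \<eta>0. f field_differentiable (at t) \<and> f (t / (1 + t)) = f t"
    using loc_D[OF Pf c0(1)] by blast
  define D0 where "D0 = Dc c0 (1/r0) (\<eta>0/2)"
  obtain g0 where g0: "g0 holomorphic_on (W 1 ` D0)" "\<forall>s\<in>D0. f (inverse s) = g0 (W 1 s)"
    using local_descent[OF \<sigma> nc h] unfolding D0_def by blast
  have R: "1/r0 > 0" "\<eta>0/2 > 0" using h by auto
  have sub: "UNIV - {0} \<subseteq> W 1 ` D0"
  proof
    fix z :: complex assume "z \<in> UNIV - {0}"
    then obtain s where "s \<in> D0" "W 1 s = z" using cov_iii[OF c0(2) R] unfolding D0_def by blast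
    then show "z \<in> W 1 ` D0" by blast
  qed
  have gh: "g0 holomorphic_on (UNIV - {0})" using g0(1) sub by (rule holomorphic_on_subset)
  define r0' where "r0' = 1 / (2 * (1/r0))"
  define \<eta>0' where "\<eta>0' = min (1/2) ((\<eta>0/2)/2)"
  have r0': "r0' > 0" "\<eta>0' > 0" using h by (auto simp: r0'_def \<eta>0'_def)
  have st: "\<forall>t\<in>csect c0 r0' \<eta>0'. f t = g0 (W 1 (inverse t))"
  proof
    fix t assume t: "t \<in> csect c0 r0' \<eta>0'"
    have "inverse t \<in> D0" using csect_sub_Dc[OF nc R, of t] t by (simp add: D0_def r0'_def \<eta>0'_def)
    then have "f (inverse (inverse t)) = g0 (W 1 (inverse t))" using g0(2) by blast
    then show "f t = g0 (W 1 (inverse t))" by simp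
  qed
  have inG0: "loc U (\<lambda>t. W 1 (inverse t) \<in> UNIV - {0})"
    by (rule loc_mono[OF loc_true]) simp
  have "loc U (\<lambda>t. f t = g0 (W 1 (inverse t)))"
    by (rule conn[OF U(1,2) \<sigma> Pf gh inG0 c0(1) r0' st])
  then show ?thesis using gh by blast
qed

lemma modU_fwd:
  assumes U: "U \<subseteq> sphere 0 1" "connected U" and c0: "c0 \<in> U" "c0 = 1 \<or> c0 = -1"
    and f: "per_section U f" "moderate_section U f"
  shows "\<exists>k. loc U (\<lambda>t. f t = k)"
proof -
  obtain g where g: "g holomorphic_on (UNIV - {0})" and L: "loc U (\<lambda>t. f t = g (W 1 (inverse t)))"
    using surjU[OF U c0 f(1)] by blast
  have mb: "modb U f" using f(2) moderate_iff[OF U(1)] by blast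
  have nc: "norm c0 = 1" using U c0 by auto
  have "\<exists>r>0. \<exists>\<eta>>0. \<exists>C N. \<forall>t\<in>csect c0 r \<eta>. norm (f t) \<le> C * norm t powr (- N)"
    using mb c0 unfolding modb_def by blast
  then obtain r \<eta> C N where b: "r > 0" "\<eta> > 0" "\<forall>t\<in>csect c0 r \<eta>. norm (f t) \<le> C * norm t powr (- N)"
    by blast
  obtain r1 \<eta>1 where b1: "r1 > 0" "\<eta>1 > 0" "r1 \<le> min r 1" "\<eta>1 \<le> \<eta>" "\<forall>t\<in>csect c0 r1 \<eta>1. f t = g (W 1 (inverse t))"
    using loc_shrink[OF L c0(1), of "min r 1" \<eta>] b by auto
  define C' where "C' = max C 0"
  define N' where "N' = max N 0"
  have bd: "\<forall>t\<in>csect c0 r1 \<eta>1. norm (g (W 1 (inverse t))) \<le> C' * norm t powr (- N')"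
  proof
    fix t assume t: "t \<in> csect c0 r1 \<eta>1"
    have tt: "t \<in> csect c0 r \<eta>" using t csect_mono[of r1 r \<eta>1 \<eta> c0] b1 by auto
    have nt: "norm t > 0" "norm t \<le> 1" using t b1 by (auto simp: csect_def)
    have "norm (g (W 1 (inverse t))) = norm (f t)" using b1(5) t by simp
    also have "\<dots> \<le> C * norm t powr (- N)" using b(3) tt by blast
    also have "\<dots> \<le> C' * norm t powr (- N)" unfolding C'_def by (intro mult_right_mono) auto
    also have "norm t powr (- N) \<le> norm t powr (- N')"
      using nt by (intro powr_mono') (auto simp: N'_def)
    then have "C' * norm t powr (- N) \<le> C' * norm t powr (- N')" by (intro mult_left_mono) (auto simp: C'_def)
    finally show "norm (g (W 1 (inverse t))) \<le> C' * norm t powr (- N')" .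
  qed
  define \<alpha> where "\<alpha> = min (\<eta>1/4) 1"
  have \<alpha>: "0 < \<alpha>" "\<alpha> \<le> 1" "\<alpha> \<le> \<eta>1/4" using b1 by (auto simp: \<alpha>_def)
  obtain c1 c2 where cc: "norm c1 = 1" "norm c2 = 1" "norm (c1 - c0) \<le> \<alpha>" "norm (c2 - c0) \<le> \<alpha>" "Im c1 < 0" "Im c2 > 0"
    using c12[OF c0(2) \<alpha>(1,2)] by blast
  have s1: "csect c1 r1 (\<eta>1/2) \<subseteq> csect c0 r1 \<eta>1" using cc(3) \<alpha> by (intro csect_shift) auto
  have s2: "csect c2 r1 (\<eta>1/2) \<subseteq> csect c0 r1 \<eta>1" using cc(4) \<alpha> by (intro csect_shift) auto
  have g1: "g holomorphic_on (ball 0 1 - {0})" using g by (rule holomorphic_on_subset) blast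
  have CN: "C' \<ge> 0" "N' \<ge> 0" by (auto simp: C'_def N'_def)
  have e2: "\<eta>1/2 > 0" using b1 by simp
  obtain h1 where h1: "h1 holomorphic_on ball 0 1" "\<forall>z\<in>ball 0 1 - {0}. h1 z = g z"
    using modrem[of 1 c1 1 g r1 "\<eta>1/2" C' N'] cc(1,5) g1 b1(1) e2 CN bd s1 by auto
  define gt where "gt z = g (inverse z)" for z
  have gt: "gt holomorphic_on (ball 0 1 - {0})"
  proof -
    have "(g \<circ> inverse) holomorphic_on (ball 0 1 - {0})"
      by (rule holomorphic_on_compose_gen[OF _ g]) (auto intro!: holomorphic_intros)
    then show ?thesis by (simp add: gt_def[abs_def] o_def)
  qed
  have bd2: "\<forall>t\<in>csect c2 r1 (\<eta>1/2). norm (gt (W (-1) (inverse t))) \<le> C' * norm t powr (- N')"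
    using bd s2 by (auto simp: gt_def W_inv)
  have sc2: "(-1) * Im c2 < 0" using cc(6) by simp
  obtain h2 where h2: "h2 holomorphic_on ball 0 1" "\<forall>z\<in>ball 0 1 - {0}. h2 z = gt z"
    using modrem[of "-1" c2 1 gt r1 "\<eta>1/2" C' N'] cc(2) sc2 gt b1(1) e2 CN bd2 by auto
  define G where "G z = (if z = 0 then h1 0 else g z)" for z
  have GA: "G holomorphic_on ball 0 1"
    by (rule holomorphic_transform[OF h1(1)]) (use h1(2) in \<open>auto simp: G_def\<close>)
  have GB: "G holomorphic_on (UNIV - {0})"
    by (rule holomorphic_transform[OF g]) (auto simp: G_def)
  have eqU: "ball 0 1 \<union> (UNIV - {0}) = (UNIV :: complex set)" by auto
  have "G holomorphic_on (ball 0 1 \<union> (UNIV - {0}))" by (rule holomorphic_on_Un[OF GA GB]) auto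
  then have GH: "G holomorphic_on UNIV" unfolding eqU .
  obtain B2 where B2: "B2 > 0" "\<forall>z. norm z \<le> 1/2 \<longrightarrow> norm (h2 z) \<le> B2" using bounded_near[OF h2(1)] by auto
  have "compact (G ` cball 0 2)"
    by (rule compact_continuous_image) (use holomorphic_on_imp_continuous_on[OF GH] continuous_on_subset in auto)
  then obtain B3 where B3: "B3 > 0" "\<forall>x\<in>G ` cball 0 2. norm x \<le> B3" using compact_imp_bounded bounded_pos by metis
  have "norm (G z) \<le> max B2 B3" for z
  proof (cases "norm z \<le> 2")
    case True
    then have "z \<in> cball 0 2" by simp
    then have "norm (G z) \<le> B3" using B3(2) by blast
    then show ?thesis by linarith
  next
    case False
    then have z0: "z \<noteq> 0" by auto
    have ni: "norm (inverse z) = inverse (norm z)" by (rule norm_inverse)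
    have "inverse (norm z) \<le> 1/2" using le_imp_inverse_le[of 2 "norm z"] False by simp
    then have iz2: "norm (inverse z) \<le> 1/2" using ni by simp
    have iz: "inverse z \<in> ball 0 1 - {0}" "norm (inverse z) \<le> 1/2" using iz2 z0 by auto
    have "G z = g z" using z0 by (simp add: G_def)
    also have "\<dots> = gt (inverse z)" by (simp add: gt_def)
    also have "\<dots> = h2 (inverse z)" using h2(2) iz by auto
    finally show ?thesis using B2 iz by auto
  qed
  then have "bounded (range G)" unfolding bounded_iff by blast
  then have "G constant_on UNIV" using Liouville_theorem[OF GH] by blast
  then obtain k where k: "\<forall>z. G z = k" unfolding constant_on_def by blast
  have "loc U (\<lambda>t. f t = k)"
  proof (rule loc_mono[OF L])
    fix t assume "f t = g (W 1 (inverse t))"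
    then show "f t = k" using k[rule_format, of "W 1 (inverse t)"] by (simp add: G_def)
  qed
  then show ?thesis by blast
qed



lemma modU_bwd:
  assumes U: "U \<subseteq> sphere 0 1" and E: "loc U (\<lambda>t. f t = k)"
  shows "per_section U f \<and> moderate_section U f"
proof -
  have E': "loc U (\<lambda>t. k = f t)" by (rule loc_mono[OF E]) simp
  have pf: "per_section U f" by (rule per_transfer[OF U per_const[OF U] E'])
  have "modb U (\<lambda>t. k)"
    unfolding modb_def
  proof
    fix c assume "c \<in> U"
    have "\<forall>t\<in>csect c 1 1. norm k \<le> norm k * norm t powr (- 0)" by (auto simp: csect_def)
    then show "\<exists>r>0. \<exists>\<eta>>0. \<exists>C N. \<forall>t\<in>csect c r \<eta>. norm k \<le> C * norm t powr (- N)"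
      using zero_less_one by blast
  qed
  then have "modb U f" using modb_transfer E' by blast
  moreover have "holo_section U f" using pf by (simp add: per_section_def)
  ultimately show ?thesis using pf moderate_iff[OF U] by blast
qed

lemma rapU_bwd:
  assumes U: "U \<subseteq> sphere 0 1" and E: "loc U (\<lambda>t. f t = 0)"
  shows "per_section U f \<and> rapid_section U f"
proof -
  have pm: "per_section U f \<and> moderate_section U f" by (rule modU_bwd[OF U E])
  have E': "loc U (\<lambda>t. 0 = f t)" by (rule loc_mono[OF E]) simp
  have "rapb U (\<lambda>t. 0)"
    unfolding rapb_def
  proof
    fix c assume "c \<in> U"
    have "\<forall>N::nat. \<exists>C. \<forall>t\<in>csect c 1 1. norm (0::complex) \<le> C * norm t ^ N"
      by (intro allI exI[of _ 0]) simp
    then show "\<exists>r>0. \<exists>\<eta>>0. \<forall>N::nat. \<exists>C. \<forall>t\<in>csect c r \<eta>. norm (0::complex) \<le> C * norm t ^ N"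
      using zero_less_one by blast
  qed
  then have "rapb U f" using rapb_transfer E' by blast
  moreover have "holo_section U f" using pm by (simp add: per_section_def)
  ultimately show ?thesis using pm rapid_iff[OF U] by blast
qed

lemma rapU_fwd:
  assumes U: "U \<subseteq> sphere 0 1" "connected U" and c0: "c0 \<in> U" "c0 = 1 \<or> c0 = -1"
    and f: "per_section U f" "rapid_section U f"
  shows "loc U (\<lambda>t. f t = 0)"
proof -
  have rb: "rapb U f" using f(2) rapid_iff[OF U(1)] by blast
  have "moderate_section U f" using rapb_modb[OF rb] f(1) moderate_iff[OF U(1)] by (simp add: per_section_def)
  then obtain k where E: "loc U (\<lambda>t. f t = k)" using modU_fwd[OF U c0 f(1)] by blast
  have nc: "norm c0 = 1" using U c0 by auto
  have "\<exists>r>0. \<exists>\<eta>>0. \<forall>N::nat. \<exists>C. \<forall>t\<in>csect c0 r \<eta>. norm (f t) \<le> C * norm t ^ N"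
    using rb c0 unfolding rapb_def by blast
  then obtain r \<eta> where b: "r > 0" "\<eta> > 0" "\<forall>N::nat. \<exists>C. \<forall>t\<in>csect c0 r \<eta>. norm (f t) \<le> C * norm t ^ N"
    by blast
  obtain C1 where C1: "\<forall>t\<in>csect c0 r \<eta>. norm (f t) \<le> C1 * norm t ^ 1" using b(3) by blast
  obtain r3 \<eta>3 where b3: "r3 > 0" "\<eta>3 > 0" "r3 \<le> r" "\<eta>3 \<le> \<eta>" "\<forall>t\<in>csect c0 r3 \<eta>3. f t = k"
    using loc_shrink[OF E c0(1) b(1,2)] by blast
  have "k = 0"
  proof (rule ccontr)
    assume k0: "k \<noteq> 0"
    define a where "a = norm k"
    have a: "a > 0" using k0 by (simp add: a_def)
    define X where "X = a / (2 * (\<bar>C1\<bar> + 1))"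
    have X: "X > 0" using a by (simp add: X_def)
    define m where "m = min r3 X"
    have m: "m > 0" "m \<le> r3" "m \<le> X" using X b3 by (auto simp: m_def)
    define \<tau> where "\<tau> = m / 2"
    have \<tau>: "\<tau> > 0" "\<tau> < r3" "\<tau> < X" using m by (auto simp: \<tau>_def)
    define t where "t = complex_of_real \<tau> * c0"
    have t3: "t \<in> csect c0 r3 \<eta>3" unfolding t_def by (rule csect_point) (use \<tau> nc b3 in auto)
    have tt: "t \<in> csect c0 r \<eta>" using t3 csect_mono[of r3 r \<eta>3 \<eta> c0] b3 by auto
    have nt: "norm t = \<tau>" using \<tau> nc by (simp add: t_def norm_mult)
    have "norm (f t) \<le> C1 * \<tau>" using C1 tt nt by force
    moreover have "C1 * \<tau> < a/2"
    proof -
      have "C1 * \<tau> \<le> (\<bar>C1\<bar> + 1) * \<tau>" using \<tau> by (intro mult_right_mono) auto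
      also have "\<dots> < (\<bar>C1\<bar> + 1) * X" using \<tau> by (intro mult_strict_left_mono) auto
      also have "\<dots> = a/2" unfolding X_def by (simp add: field_simps)
      finally show ?thesis .
    qed
    moreover have "norm (f t) = a" using b3(5) t3 by (simp add: a_def)
    ultimately show False using a by linarith
  qed
  then show ?thesis using E by simp
qed

theorem caseU:
  assumes U: "U \<subseteq> sphere 0 1" "connected U" and c0: "c0 \<in> U" "c0 = 1 \<or> c0 = -1"
  shows "entire_u_description U"
  unfolding entire_u_description_def ucoord_eq
proof (intro conjI allI impI)
  fix g assume "g holomorphic_on (UNIV - {0})"
  then show "per_section U (\<lambda>t. g (W 1 (inverse t)))" by (rule embedU[OF U(1)])
next
  fix g1 g2 :: "complex \<Rightarrow> complex" and z :: complex
  assume a: "g1 holomorphic_on (UNIV - {0}) \<and> g2 holomorphic_on (UNIV - {0})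
        \<and> germ_eq U (\<lambda>t. g1 (W 1 (inverse t))) (\<lambda>t. g2 (W 1 (inverse t)))" and z: "z \<noteq> 0"
  then have "germ_eq U (\<lambda>t. g1 (W 1 (inverse t))) (\<lambda>t. g2 (W 1 (inverse t)))" by blast
  then have "loc U (\<lambda>t. g1 (W 1 (inverse t)) = g2 (W 1 (inverse t)))" by (simp add: germ_eq_iff[OF U(1)])
  then show "g1 z = g2 z" using injU[OF U(1) c0] z by blast
next
  fix f assume "per_section U f"
  then obtain g where "g holomorphic_on (UNIV - {0})" "loc U (\<lambda>t. f t = g (W 1 (inverse t)))"
    using surjU[OF U c0] by blast
  moreover have "germ_eq U f (\<lambda>t. g (W 1 (inverse t)))" using calculation(2) by (simp add: germ_eq_iff[OF U(1)])
  ultimately show "\<exists>g. g holomorphic_on (UNIV - {0}) \<and> germ_eq U f (\<lambda>t. g (W 1 (inverse t)))" by blast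
next
  fix f
  show "(per_section U f \<and> moderate_section U f) \<longleftrightarrow> (\<exists>c. germ_eq U f (\<lambda>t. c))"
  proof
    assume "per_section U f \<and> moderate_section U f"
    then obtain k where "loc U (\<lambda>t. f t = k)" using modU_fwd[OF U c0] by blast
    then have "germ_eq U f (\<lambda>t. k)" by (simp add: germ_eq_iff[OF U(1)])
    then show "\<exists>c. germ_eq U f (\<lambda>t. c)" by blast
  next
    assume "\<exists>c. germ_eq U f (\<lambda>t. c)"
    then obtain k where "germ_eq U f (\<lambda>t. k)" by blast
    then have "loc U (\<lambda>t. f t = k)" by (simp add: germ_eq_iff[OF U(1)])
    then show "per_section U f \<and> moderate_section U f" by (rule modU_bwd[OF U(1)])
  qed
next
  fix f
  show "(per_section U f \<and> rapid_section U f) \<longleftrightarrow> germ_eq U f (\<lambda>t. 0)"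
  proof
    assume "per_section U f \<and> rapid_section U f"
    then have "loc U (\<lambda>t. f t = 0)" using rapU_fwd[OF U c0] by blast
    then show "germ_eq U f (\<lambda>t. 0)" by (simp add: germ_eq_iff[OF U(1)])
  next
    assume "germ_eq U f (\<lambda>t. 0)"
    then have "loc U (\<lambda>t. f t = 0)" by (simp add: germ_eq_iff[OF U(1)])
    then show "per_section U f \<and> rapid_section U f" by (rule rapU_bwd[OF U(1)])
  qed
qed

theorem lemma2p2:
  fixes U :: "complex set"
  assumes "U \<subseteq> sphere 0 1"
    and "openin (top_of_set (sphere 0 1)) U"
    and "connected U"
    and "U \<noteq> {}"
  shows "(U \<subseteq> arc_dir 0 pi \<longrightarrow> punctured_germ_description U vcoord)
       \<and> (U \<subseteq> arc_dir (- pi) 0 \<longrightarrow> punctured_germ_description U ucoord)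
       \<and> ((1 \<in> U \<or> -1 \<in> U) \<longrightarrow> entire_u_description U)"
proof (intro conjI impI)
  assume A: "U \<subseteq> arc_dir 0 pi"
  have sg: "\<forall>c\<in>U. (-1) * Im c < 0"
  proof
    fix c assume "c \<in> U"
    then obtain \<theta> where "c = cis \<theta>" "0 < \<theta>" "\<theta> < pi" using A unfolding arc_dir_def by blast
    then show "(-1) * Im c < 0" using sin_gt_zero by simp
  qed
  have "punctured_germ_description U (\<lambda>t. W (-1) (inverse t))"
    by (rule caseA) (use assms sg in auto)
  then show "punctured_germ_description U vcoord" by (simp add: vcoord_eq)
next
  assume A: "U \<subseteq> arc_dir (- pi) 0"
  have sg: "\<forall>c\<in>U. 1 * Im c < 0"
  proof
    fix c assume "c \<in> U"
    then obtain \<theta> where th: "c = cis \<theta>" "- pi < \<theta>" "\<theta> < 0" using A unfolding arc_dir_def by blast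
    have "sin (- \<theta>) > 0" using th by (intro sin_gt_zero) auto
    then show "1 * Im c < 0" using th by simp
  qed
  have "punctured_germ_description U (\<lambda>t. W 1 (inverse t))"
    by (rule caseA) (use assms sg in auto)
  then show "punctured_germ_description U ucoord" by (simp add: ucoord_eq)
next
  assume "1 \<in> U \<or> -1 \<in> U"
  then obtain c0 where "c0 \<in> U" "c0 = 1 \<or> c0 = -1" by blast
  then show "entire_u_description U" using caseU assms by blast
qed


end
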